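(* Fix $p\ge 3$ and let $\lambda=\lambda_p=2\cos(\pi/p)$. Suppose that $\alpha$ and $\beta$ are hyperbolic fixed points of $G_p$ with associated hyperbolic $\lambda$-BQFs $Q_\alpha$ and $Q_\beta$, and let $V\in G_p$. Then $Q_\beta=Q_\alpha\circ V$ if and only if $\beta=V^{-1}\alpha$.
   Context: Let $S=\begin{pmatrix}1&\lambda\\0&1\end{pmatrix}$, $T=\begin{pmatrix}0&-1\\1&0\end{pmatrix}$, and $G_p=\langle S,T\rangle/\{\pm I\}$ (the Hecke group), acting on $\mathbb{C}\cup\{\infty\}$ by linear fractional transformations $z\mapsto\frac{az+b}{cz+d}$. An element $\begin{pmatrix}a&b\\c&d\end{pmatrix}$ is hyperbolic if $|a+d|>2$; a hyperbolic fixed point is a real number fixed by a hyperbolic element of $G_p$. A $\lambda$-BQF is a binary quadratic form $Q(x,y)=Ax^2+Bxy+Cy^2$, written $[A,B,C]$, with $A,B,C\in\mathbb{Z}[\lambda]$; its discriminant is $D=B^2-4AC$. For $M=\begin{pmatrix}a&b\\c&d\end{pmatrix}\in G_p$, $(Q\circ M)(x,y)=Q(ax+by,cx+dy)$. For a hyperbolic fixed point $\alpha$, choose a matrix $\begin{pmatrix}a&b\\c&d\end{pmatrix}$ representing a generator of the (cyclic) stabilizer of $\alpha$ in $G_p$, replaced by its inverse if necessary so that $\alpha=\frac{a-d+\sqrt{D}}{2c}$ where $D=(a+d)^2-4$ and $\sqrt{D}>0$; then $Q_\alpha=[c,d-a,-b]$ (this is independent of the choices). Such forms are called hyperbolic $\lambda$-BQFs.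 *)

theory Defs
  imports Complex_Main
begin

datatype mat2 = M2 real real real real

fun mmul :: "mat2 \<Rightarrow> mat2 \<Rightarrow> mat2" where
  "mmul (M2 a b c d) (M2 e f g h) = M2 (a*e+b*g) (a*f+b*h) (c*e+d*g) (c*f+d*h)"

text \<open>Inverse of a determinant-one matrix (all matrices in the Hecke group have det 1).\<close>
fun minv :: "mat2 \<Rightarrow> mat2" where
  "minv (M2 a b c d) = M2 d (-b) (-c) a"

fun mneg :: "mat2 \<Rightarrow> mat2" where
  "mneg (M2 a b c d) = M2 (-a) (-b) (-c) (-d)"

fun mtrace :: "mat2 \<Rightarrow> real" where
  "mtrace (M2 a b c d) = a + d"

definition mid :: mat2 where "mid = M2 1 0 0 1"

definition lam :: "nat \<Rightarrow> real" where "lam p = 2 * cos (pi / real p)"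

definition Smat :: "nat \<Rightarrow> mat2" where "Smat p = M2 1 (lam p) 0 1"

definition Tmat :: mat2 where "Tmat = M2 0 (-1) 1 0"

text \<open>Matrices of the group generated by S and T in SL(2,R); the Hecke group G_p is
  this group modulo {+I,-I}.\<close>
inductive_set hecke_mats :: "nat \<Rightarrow> mat2 set" for p :: nat where
  hm_id: "mid \<in> hecke_mats p"
| hm_S: "M \<in> hecke_mats p \<Longrightarrow> mmul M (Smat p) \<in> hecke_mats p"
| hm_T: "M \<in> hecke_mats p \<Longrightarrow> mmul M Tmat \<in> hecke_mats p"
| hm_Si: "M \<in> hecke_mats p \<Longrightarrow> mmul M (minv (Smat p)) \<in> hecke_mats p"
| hm_Ti: "M \<in> hecke_mats p \<Longrightarrow> mmul M (minv Tmat) \<in> hecke_mats p"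

primrec mpow :: "mat2 \<Rightarrow> nat \<Rightarrow> mat2" where
  "mpow M 0 = mid"
| "mpow M (Suc n) = mmul M (mpow M n)"

definition mzpow :: "mat2 \<Rightarrow> int \<Rightarrow> mat2" where
  "mzpow M n = (if n \<ge> 0 then mpow M (nat n) else mpow (minv M) (nat (- n)))"

text \<open>Action by linear fractional transformations on R \<union> {\<infinity>}; None stands for \<infinity>.\<close>
fun moeb :: "mat2 \<Rightarrow> real option \<Rightarrow> real option" where
  "moeb (M2 a b c d) None = (if c = 0 then None else Some (a / c))"
| "moeb (M2 a b c d) (Some x) =
     (if c * x + d = 0 then None else Some ((a * x + b) / (c * x + d)))"

definition hyperbolic :: "mat2 \<Rightarrow> bool" where
  "hyperbolic M \<longleftrightarrow> \<bar>mtrace M\<bar> > 2"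

definition hyp_fixed_point :: "nat \<Rightarrow> real \<Rightarrow> bool" where
  "hyp_fixed_point p \<alpha> \<longleftrightarrow>
     (\<exists>M \<in> hecke_mats p. hyperbolic M \<and> moeb M (Some \<alpha>) = Some \<alpha>)"

text \<open>M represents a generator of the (cyclic) stabilizer of \<alpha> in G_p = group / {+I,-I}.\<close>
definition stab_generator :: "nat \<Rightarrow> real \<Rightarrow> mat2 \<Rightarrow> bool" where
  "stab_generator p \<alpha> M \<longleftrightarrow>
     M \<in> hecke_mats p \<and> moeb M (Some \<alpha>) = Some \<alpha> \<and>
     (\<forall>N \<in> hecke_mats p. moeb N (Some \<alpha>) = Some \<alpha> \<longrightarrow>
        (\<exists>n::int. N = mzpow M n \<or> N = mneg (mzpow M n)))"

type_synonym bqf = "real \<times> real \<times> real"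

definition bqf_eval :: "bqf \<Rightarrow> real \<Rightarrow> real \<Rightarrow> real" where
  "bqf_eval Q x y = (case Q of (A, B, C) \<Rightarrow> A * x^2 + B * x * y + C * y^2)"

text \<open>(Q o M)(x,y) = Q(ax+by, cx+dy), as coefficient triple.\<close>
fun bqf_comp :: "bqf \<Rightarrow> mat2 \<Rightarrow> bqf" where
  "bqf_comp (A, B, C) (M2 a b c d) =
     (A*a^2 + B*a*c + C*c^2, 2*A*a*b + B*(a*d + b*c) + 2*C*c*d, A*b^2 + B*b*d + C*d^2)"

definition hyp_bqf :: "nat \<Rightarrow> real \<Rightarrow> bqf" where
  "hyp_bqf p \<alpha> = (THE Q. \<exists>a b c d.
      stab_generator p \<alpha> (M2 a b c d) \<and> c \<noteq> 0 \<and> (a + d)^2 - 4 > 0 \<and>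
      \<alpha> = (a - d + sqrt ((a + d)^2 - 4)) / (2 * c) \<and> Q = (c, d - a, - b))"

end

theory Submission
  imports Defs
begin
fun mdet :: "mat2 \<Rightarrow> real" where "mdet (M2 a b c d) = a*d - b*c"

lemma mmul_assoc: "mmul (mmul A B) C = mmul A (mmul B C)"
  by (cases A; cases B; cases C) (simp add: algebra_simps)

lemma mmul_mid_left[simp]: "mmul mid A = A" by (cases A) (simp add: mid_def)
lemma mmul_mid_right[simp]: "mmul A mid = A" by (cases A) (simp add: mid_def)
lemma mdet_mmul: "mdet (mmul A B) = mdet A * mdet B"
  by (cases A; cases B) (simp add: algebra_simps)
lemma minv_right: "mdet A = 1 \<Longrightarrow> mmul A (minv A) = mid"
  by (cases A) (simp add: mid_def algebra_simps)
lemma minv_left: "mdet A = 1 \<Longrightarrow> mmul (minv A) A = mid"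
  by (cases A) (simp add: mid_def algebra_simps)
lemma minv_minv[simp]: "minv (minv A) = A" by (cases A) simp
lemma minv_mmul: "minv (mmul A B) = mmul (minv B) (minv A)"
  by (cases A; cases B) (simp add: algebra_simps)
lemma mneg_mneg[simp]: "mneg (mneg A) = A" by (cases A) simp
lemma mmul_mneg_left: "mmul (mneg A) B = mneg (mmul A B)"
  by (cases A; cases B) (simp add: algebra_simps)
lemma mmul_mneg_right: "mmul A (mneg B) = mneg (mmul A B)"
  by (cases A; cases B) (simp add: algebra_simps)
lemma minv_mneg: "minv (mneg A) = mneg (minv A)" by (cases A) simp
lemma mdet_minv[simp]: "mdet (minv A) = mdet A" by (cases A) (simp add: algebra_simps)
lemma mdet_mneg[simp]: "mdet (mneg A) = mdet A" by (cases A) (simp add: algebra_simps)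
lemma minv_mid[simp]: "minv mid = mid" by (simp add: mid_def)

lemma hecke_det: "M \<in> hecke_mats p \<Longrightarrow> mdet M = 1"
  by (induction rule: hecke_mats.induct) (auto simp: mdet_mmul Smat_def Tmat_def mid_def)

lemma hecke_mmul: "B \<in> hecke_mats p \<Longrightarrow> A \<in> hecke_mats p \<Longrightarrow> mmul A B \<in> hecke_mats p"
proof (induction B rule: hecke_mats.induct)
  case hm_id then show ?case by simp
next
  case (hm_S M) then show ?case by (metis hecke_mats.hm_S mmul_assoc)
next
  case (hm_T M) then show ?case by (metis hecke_mats.hm_T mmul_assoc)
next
  case (hm_Si M) then show ?case by (metis hecke_mats.hm_Si mmul_assoc)
next
  case (hm_Ti M) then show ?case by (metis hecke_mats.hm_Ti mmul_assoc)
qed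

lemma hecke_gens: "Smat p \<in> hecke_mats p" "Tmat \<in> hecke_mats p"
  "minv (Smat p) \<in> hecke_mats p" "minv Tmat \<in> hecke_mats p"
  using hecke_mats.hm_S[OF hecke_mats.hm_id, of p] hecke_mats.hm_T[OF hecke_mats.hm_id, of p]
    hecke_mats.hm_Si[OF hecke_mats.hm_id, of p] hecke_mats.hm_Ti[OF hecke_mats.hm_id, of p]
  by simp_all

lemma hecke_minv: "A \<in> hecke_mats p \<Longrightarrow> minv A \<in> hecke_mats p"
proof (induction A rule: hecke_mats.induct)
  case hm_id then show ?case by (simp add: hecke_mats.hm_id)
next
  case (hm_S M) then show ?case by (simp add: minv_mmul hecke_mmul hecke_gens)
next
  case (hm_T M) then show ?case by (simp add: minv_mmul hecke_mmul hecke_gens)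
next
  case (hm_Si M) then show ?case by (simp add: minv_mmul hecke_mmul hecke_gens)
next
  case (hm_Ti M) then show ?case by (simp add: minv_mmul hecke_mmul hecke_gens)
qed

lemma TT: "mmul Tmat Tmat = mneg mid" by (simp add: Tmat_def mid_def)
lemma minvT: "minv Tmat = mneg Tmat" by (simp add: Tmat_def)

lemma hecke_mneg: "A \<in> hecke_mats p \<Longrightarrow> mneg A \<in> hecke_mats p"
proof -
  assume "A \<in> hecke_mats p"
  hence "mmul (mmul A Tmat) Tmat \<in> hecke_mats p" by (simp add: hecke_mmul hecke_gens)
  thus ?thesis by (simp add: mmul_assoc TT mmul_mneg_right)
qed

definition sq :: "nat \<Rightarrow> nat \<Rightarrow> real" where
  "sq p k = sin (real k * pi / real p) / sin (pi / real p)"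

lemma sin_th_pos: "p \<ge> 3 \<Longrightarrow> sin (pi / real p) > 0"
  by (rule sin_gt_zero) (auto simp: field_simps)

lemma sq0: "sq p 0 = 0" by (simp add: sq_def)
lemma sq1: "p \<ge> 3 \<Longrightarrow> sq p 1 = 1" using sin_th_pos[of p] by (simp add: sq_def)

lemma sq_rec: assumes "p \<ge> 3"
  shows "sq p (Suc (Suc k)) = lam p * sq p (Suc k) - sq p k"
proof -
  define t where "t = pi / real p"
  define x where "x = real (Suc k) * t"
  have e1: "real (Suc (Suc k)) * pi / real p = x + t" using assms by (simp add: x_def t_def field_simps)
  have e2: "real k * pi / real p = x - t" by (simp add: x_def t_def add_divide_distrib algebra_simps)
  have e3: "real (Suc k) * pi / real p = x" by (simp add: x_def t_def)
  have key: "sin (x + t) = 2 * cos t * sin x - sin (x - t)"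
    by (simp add: sin_add sin_diff algebra_simps)
  have "sin t > 0" using sin_th_pos[OF assms] by (simp add: t_def)
  thus ?thesis unfolding sq_def lam_def e1 e2 e3 t_def[symmetric] key
    by (simp add: field_simps)
qed

lemma sq_p: "p \<ge> 3 \<Longrightarrow> sq p p = 0" by (simp add: sq_def)
lemma sq_pm1: assumes "p \<ge> 3" shows "sq p (p - 1) = 1"
proof -
  have "real (p - 1) * pi / real p = pi - pi / real p" using assms by (simp add: of_nat_diff field_simps)
  thus ?thesis using sin_th_pos[OF assms] by (simp add: sq_def)
qed
lemma sq_pp1: assumes "p \<ge> 3" shows "sq p (Suc p) = -1"
proof -
  have "real (Suc p) * pi / real p = pi + pi / real p" using assms by (simp add: field_simps)
  thus ?thesis using sin_th_pos[OF assms] by (simp add: sq_def)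
qed

lemma sq_ge1: assumes "p \<ge> 3" "1 \<le> k" "k \<le> p - 1" shows "sq p k \<ge> 1"
proof -
  have sp: "sin (pi / real p) > 0" using sin_th_pos[OF assms(1)] .
  have "sin (pi / real p) \<le> sin (real k * pi / real p)"
  proof (cases "real k * pi / real p \<le> pi / 2")
    case True
    show ?thesis
    proof (rule sin_monotone_2pi_le)
      show "- (pi / 2) \<le> pi / real p" using assms
        by (metis divide_nonneg_nonneg le_minus_iff neg_le_0_iff_le of_nat_0_le_iff pi_ge_zero zero_le_numeral order_trans)
      have "1 \<le> real k" using assms by simp
      thus "pi / real p \<le> real k * pi / real p" using assms
        by (simp add: field_simps)
    qed (use True in auto)
  next
    case False
    have eq: "sin (real k * pi / real p) = sin (real (p - k) * pi / real p)"
    proof -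
      have "real (p - k) * pi / real p = pi - real k * pi / real p"
        using assms by (simp add: of_nat_diff field_simps)
      thus ?thesis by simp
    qed
    have "sin (pi / real p) \<le> sin (real (p - k) * pi / real p)"
    proof (rule sin_monotone_2pi_le)
      show "- (pi / 2) \<le> pi / real p" using assms
        by (metis divide_nonneg_nonneg le_minus_iff neg_le_0_iff_le of_nat_0_le_iff pi_ge_zero zero_le_numeral order_trans)
      have "1 \<le> real (p - k)" using assms by simp
      hence "pi * 1 \<le> pi * real (p - k)" by (intro mult_left_mono) auto
      thus "pi / real p \<le> real (p - k) * pi / real p" using assms
        by (simp add: divide_right_mono mult.commute)
      have "real (p - k) * pi / real p = pi - real k * pi / real p"
        using assms by (simp add: of_nat_diff field_simps)
      thus "real (p - k) * pi / real p \<le> pi / 2" using False by simp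
    qed
    thus ?thesis using eq by simp
  qed
  thus ?thesis using sp by (simp add: sq_def)
qed

lemma sq_01: assumes "p \<ge> 3" "k \<le> p" shows "sq p k = 0 \<or> sq p k \<ge> 1"
proof -
  consider "k = 0" | "k = p" | "1 \<le> k \<and> k \<le> p - 1" using assms by linarith
  thus ?thesis using sq0 sq_p[OF assms(1)] sq_ge1[OF assms(1)] by cases auto
qed

definition Pm :: "nat \<Rightarrow> nat \<Rightarrow> mat2" where
  "Pm p k = M2 (sq p k) (sq p (Suc k)) (sq p (k - 1)) (sq p k)"

inductive_set PS :: "nat \<Rightarrow> mat2 set" for p :: nat where
  ps_id: "mid \<in> PS p"
| ps_step: "X \<in> PS p \<Longrightarrow> 1 \<le> k \<Longrightarrow> k \<le> p - 1 \<Longrightarrow> mmul X (Pm p k) \<in> PS p"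

fun goodm :: "mat2 \<Rightarrow> bool" where
  "goodm (M2 a b c d) = (a \<ge> 1 \<and> d \<ge> 1 \<and> (b = 0 \<or> b \<ge> 1) \<and> (c = 0 \<or> c \<ge> 1))"

lemma goodm_Pm: assumes "p \<ge> 3" "1 \<le> k" "k \<le> p - 1" shows "goodm (Pm p k)"
  using sq_ge1[OF assms] sq_01[OF assms(1), of "Suc k"] sq_01[OF assms(1), of "k - 1"] assms
  by (auto simp: Pm_def)

lemma z01_mul: "(x::real) = 0 \<or> x \<ge> 1 \<Longrightarrow> y \<ge> 1 \<Longrightarrow> x * y = 0 \<or> x * y \<ge> 1"
proof (cases "x = 0")
  case False
  assume "x = 0 \<or> x \<ge> 1" "y \<ge> 1"
  hence "1 * 1 \<le> x * y" using False by (intro mult_mono) auto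
  thus ?thesis by simp
qed simp

lemma z01_add: "(x::real) = 0 \<or> x \<ge> 1 \<Longrightarrow> (y::real) = 0 \<or> y \<ge> 1 \<Longrightarrow> x + y = 0 \<or> x + y \<ge> 1"
  by auto

lemma goodm_mmul: "goodm A \<Longrightarrow> goodm B \<Longrightarrow> goodm (mmul A B)"
proof (cases A; cases B)
  fix a b c d e f g h
  assume A: "goodm A" "goodm B" "A = M2 a b c d" "B = M2 e f g h"
  hence h: "a \<ge> 1" "d \<ge> 1" "b = 0 \<or> b \<ge> 1" "c = 0 \<or> c \<ge> 1"
        "e \<ge> 1" "h \<ge> 1" "f = 0 \<or> f \<ge> 1" "g = 0 \<or> g \<ge> 1" by auto
  have nb: "b \<ge> 0" "c \<ge> 0" "f \<ge> 0" "g \<ge> 0" using h by auto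
  have 1: "a*e+b*g \<ge> 1"
  proof -
    have "a * e \<ge> 1 * 1" using h by (intro mult_mono) auto
    moreover have "b * g \<ge> 0" using nb by simp
    ultimately show ?thesis by simp
  qed
  have 2: "c*f+d*h \<ge> 1"
  proof -
    have "d * h \<ge> 1 * 1" using h by (intro mult_mono) auto
    moreover have "c * f \<ge> 0" using nb by simp
    ultimately show ?thesis by simp
  qed
  have 3: "a*f+b*h = 0 \<or> a*f+b*h \<ge> 1"
    using z01_add[OF z01_mul[OF h(7) h(1)] z01_mul[OF h(3) h(6)]] by (simp add: mult.commute)
  have 4: "c*e+d*g = 0 \<or> c*e+d*g \<ge> 1"
    using z01_add[OF z01_mul[OF h(4) h(5)] z01_mul[OF h(8) h(2)]] by (simp add: mult.commute)
  show "goodm (mmul A B)" using 1 2 3 4 A(3,4) by simp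
qed

lemma PS_good: "X \<in> PS p \<Longrightarrow> p \<ge> 3 \<Longrightarrow> goodm X"
proof (induction rule: PS.induct)
  case ps_id show ?case by (simp add: mid_def)
next
  case (ps_step X k) thus ?case using goodm_mmul goodm_Pm by simp
qed

lemma Pm1: "p \<ge> 3 \<Longrightarrow> Pm p 1 = Smat p"
  using sq1[of p] sq0[of p] sq_rec[of p 0] by (simp add: Pm_def Smat_def)

lemma Pm_TS: assumes "p \<ge> 3" "1 \<le> k"
  shows "mmul (mmul (Pm p k) Tmat) (Smat p) = Pm p (Suc k)"
proof -
  obtain j where j: "k = Suc j" using assms by (cases k) auto
  show ?thesis using sq_rec[OF assms(1), of j] sq_rec[OF assms(1), of "Suc j"] j
    by (simp add: Pm_def Tmat_def Smat_def algebra_simps)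
qed

lemma Pm_p: "p \<ge> 3 \<Longrightarrow> Pm p p = Tmat"
  using sq_p[of p] sq_pp1[of p] sq_pm1[of p] by (simp add: Pm_def Tmat_def)

lemma Pm_Si: assumes "p \<ge> 3" "2 \<le> k"
  shows "mmul (Pm p k) (minv (Smat p)) = mmul (Pm p (k - 1)) Tmat"
proof -
  define j where "j = k - 2"
  have j: "k = Suc (Suc j)" using assms by (simp add: j_def)
  show ?thesis using sq_rec[OF assms(1), of j] sq_rec[OF assms(1), of "Suc j"] j
    by (simp add: Pm_def Tmat_def Smat_def algebra_simps)
qed

lemma Pm1_Si: "p \<ge> 3 \<Longrightarrow> mmul (Pm p 1) (minv (Smat p)) = mid"
  using Pm1[of p] by (simp add: Smat_def mid_def)

lemma Si_eq: assumes "p \<ge> 3"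
  shows "minv (Smat p) = mneg (mmul (mmul Tmat (Pm p (p - 1))) Tmat)"
proof -
  define j where "j = p - 2"
  have j: "p = Suc (Suc j)" using assms by (simp add: j_def)
  have "sq p (p - 2) = lam p" using sq_rec[OF assms, of j] sq_p[OF assms] sq_pm1[OF assms] j by simp
  hence "sq p (p - 1 - 1) = lam p" by (simp add: j)
  thus ?thesis using sq_p[OF assms] sq_pm1[OF assms] assms
    by (simp add: Pm_def Tmat_def Smat_def)
qed

definition tm :: "bool \<Rightarrow> mat2" where "tm b = (if b then Tmat else mid)"
definition sg :: "bool \<Rightarrow> mat2 \<Rightarrow> mat2" where "sg e M = (if e then mneg M else M)"

definition Xset :: "nat \<Rightarrow> mat2 set" where
  "Xset p = {g. \<exists>X\<in>PS p. \<exists>l r e. g = sg e (mmul (mmul (tm l) X) (tm r))}"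

lemma XsetI: "X \<in> PS p \<Longrightarrow> g = sg e (mmul (mmul (tm l) X) (tm r)) \<Longrightarrow> g \<in> Xset p"
  unfolding Xset_def by blast

lemma TTZ: "mmul Tmat (mmul Tmat Z) = mneg Z"
  by (simp add: mmul_assoc[symmetric] TT mmul_mneg_left)

lemma sg_mmul: "mmul (sg e M) Z = sg e (mmul M Z)"
  by (simp add: sg_def mmul_mneg_left)
lemma sg_neg: "mneg (sg e M) = sg (\<not> e) M" by (simp add: sg_def)

lemmas msimps = TT mmul_assoc mmul_mneg_left mmul_mneg_right TTZ sg_mmul tm_def sg_def

lemma Xset_mneg: assumes "g \<in> Xset p" shows "mneg g \<in> Xset p"
proof -
  obtain X l r e where X: "X \<in> PS p" and g: "g = sg e (mmul (mmul (tm l) X) (tm r))"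
    using assms unfolding Xset_def by blast
  show ?thesis using XsetI[OF X, of _ "\<not> e" l r] g sg_neg by simp
qed

lemma ps1: "p \<ge> 3 \<Longrightarrow> Pm p 1 \<in> PS p"
  using PS.ps_step[OF PS.ps_id, of 1 p] by simp

lemma Xset_T: assumes "g \<in> Xset p" shows "mmul g Tmat \<in> Xset p"
proof -
  obtain X l r e where X: "X \<in> PS p" and g: "g = sg e (mmul (mmul (tm l) X) (tm r))"
    using assms unfolding Xset_def by blast
  show ?thesis
  proof (cases r)
    case True
    hence "mmul g Tmat = sg (\<not> e) (mmul (mmul (tm l) X) (tm False))"
      using g by (simp add: msimps)
    thus ?thesis using X XsetI by blast
  next
    case False
    hence "mmul g Tmat = sg e (mmul (mmul (tm l) X) (tm True))"
      using g by (simp add: msimps)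
    thus ?thesis using X XsetI by blast
  qed
qed

lemma Xset_Ti: "g \<in> Xset p \<Longrightarrow> mmul g (minv Tmat) \<in> Xset p"
  using Xset_mneg[OF Xset_T] by (simp add: minvT mmul_mneg_right)

lemma Xset_S: assumes "g \<in> Xset p" "p \<ge> 3" shows "mmul g (Smat p) \<in> Xset p"
proof -
  obtain X l r e where X: "X \<in> PS p" and g: "g = sg e (mmul (mmul (tm l) X) (tm r))"
    using assms unfolding Xset_def by blast
  show ?thesis
  proof (cases r)
    case False
    have "mmul X (Pm p 1) \<in> PS p" using PS.ps_step[OF X, of 1] assms by simp
    moreover have "mmul g (Smat p) = sg e (mmul (mmul (tm l) (mmul X (Pm p 1))) (tm False))"
      using g False Pm1[OF assms(2)] by (simp add: msimps)
    ultimately show ?thesis using XsetI by blast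
  next
    case True
    show ?thesis using X
    proof cases
      case ps_id
      show ?thesis
      proof (cases l)
        case True
        have "mmul g (Smat p) = sg (\<not> e) (mmul (mmul (tm False) (Pm p 1)) (tm False))"
          using g True \<open>r\<close> ps_id Pm1[OF assms(2)] by (simp add: msimps)
        thus ?thesis using XsetI ps1[OF assms(2)] by blast
      next
        case False
        have "mmul g (Smat p) = sg e (mmul (mmul (tm True) (Pm p 1)) (tm False))"
          using g False \<open>r\<close> ps_id Pm1[OF assms(2)] by (simp add: msimps)
        thus ?thesis using XsetI ps1[OF assms(2)] by blast
      qed
    next
      case (ps_step X' k)
      have e: "mmul (Pm p k) (mmul Tmat (Smat p)) = Pm p (Suc k)"
        using Pm_TS[OF assms(2) ps_step(3)] by (simp add: mmul_assoc)
      show ?thesis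
      proof (cases "Suc k \<le> p - 1")
        case True
        have "mmul X' (Pm p (Suc k)) \<in> PS p" using PS.ps_step[OF ps_step(2), of "Suc k"] True by simp
        moreover have "mmul g (Smat p) = sg e (mmul (mmul (tm l) (mmul X' (Pm p (Suc k)))) (tm False))"
          using g \<open>r\<close> ps_step(1) e by (simp add: msimps)
        ultimately show ?thesis using XsetI by blast
      next
        case False
        hence "Suc k = p" using ps_step(4) assms(2) by simp
        hence "mmul g (Smat p) = sg e (mmul (mmul (tm l) X') (tm True))"
          using g \<open>r\<close> ps_step(1) e Pm_p[OF assms(2)] by (simp add: msimps)
        thus ?thesis using XsetI ps_step(2) by blast
      qed
    qed
  qed
qed

lemma Xset_Si: assumes "g \<in> Xset p" "p \<ge> 3" shows "mmul g (minv (Smat p)) \<in> Xset p"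
proof -
  obtain X l r e where X: "X \<in> PS p" and g: "g = sg e (mmul (mmul (tm l) X) (tm r))"
    using assms unfolding Xset_def by blast
  have pp: "mid \<in> PS p" "mmul X (Pm p (p - 1)) \<in> PS p" "mmul mid (Pm p (p - 1)) \<in> PS p"
    using PS.ps_step[OF X, of "p - 1"] PS.ps_step[OF PS.ps_id, of "p - 1" p] assms PS.ps_id
    by auto
  note Si = Si_eq[OF assms(2)]
  show ?thesis
  proof (cases r)
    case True
    have "mmul g (minv (Smat p)) = sg e (mmul (mmul (tm l) (mmul X (Pm p (p - 1)))) (tm True))"
      using g True Si by (simp add: msimps)
    thus ?thesis using XsetI pp by blast
  next
    case False
    show ?thesis using X
    proof cases
      case ps_id
      show ?thesis
      proof (cases l)
        case True
        have "mmul g (minv (Smat p)) = sg e (mmul (mmul (tm False) (mmul mid (Pm p (p - 1)))) (tm True))"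
          using g True \<open>\<not> r\<close> ps_id Si by (simp add: msimps)
        thus ?thesis using XsetI pp by blast
      next
        case False
        have "mmul g (minv (Smat p)) = sg (\<not> e) (mmul (mmul (tm True) (mmul mid (Pm p (p - 1)))) (tm True))"
          using g False \<open>\<not> r\<close> ps_id Si by (simp add: msimps)
        thus ?thesis using XsetI pp by blast
      qed
    next
      case (ps_step X' k)
      show ?thesis
      proof (cases "k = 1")
        case True
        have "mmul g (minv (Smat p)) = sg e (mmul (mmul (tm l) X') (tm False))"
          using g \<open>\<not> r\<close> ps_step(1) True Pm1_Si[OF assms(2)] by (simp add: msimps)
        thus ?thesis using XsetI ps_step(2) by blast
      next
        case False
        hence k2: "2 \<le> k" using ps_step(3) by simp
        have e: "mmul (Pm p k) (minv (Smat p)) = mmul (Pm p (k - 1)) Tmat"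
          using Pm_Si[OF assms(2) k2] .
        have "mmul X' (Pm p (k - 1)) \<in> PS p" using PS.ps_step[OF ps_step(2), of "k - 1"] k2 ps_step(4) by simp
        moreover have "mmul g (minv (Smat p)) = sg e (mmul (mmul (tm l) (mmul X' (Pm p (k - 1)))) (tm True))"
          using g \<open>\<not> r\<close> ps_step(1) e by (simp add: msimps)
        ultimately show ?thesis using XsetI by blast
      qed
    qed
  qed
qed

lemma hecke_Xset: assumes "M \<in> hecke_mats p" "p \<ge> 3" shows "M \<in> Xset p"
  using assms(1)
proof (induction rule: hecke_mats.induct)
  case hm_id
  show ?case by (rule XsetI[OF PS.ps_id, of _ False False False]) (simp add: tm_def sg_def)
next
  case (hm_S M) thus ?case using Xset_S assms(2) by blast
next
  case (hm_T M) thus ?case using Xset_T by blast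
next
  case (hm_Si M) thus ?case using Xset_Si assms(2) by blast
next
  case (hm_Ti M) thus ?case using Xset_Ti by blast
qed

lemma key_c: assumes "M2 a b c d \<in> hecke_mats p" "p \<ge> 3" shows "c = 0 \<or> \<bar>c\<bar> \<ge> 1"
proof -
  obtain X l r e where X: "X \<in> PS p" and g: "M2 a b c d = sg e (mmul (mmul (tm l) X) (tm r))"
    using hecke_Xset[OF assms] unfolding Xset_def by blast
  obtain x1 x2 x3 x4 where Xe: "X = M2 x1 x2 x3 x4" by (cases X)
  have gd: "goodm X" using PS_good[OF X assms(2)] .
  hence "x1 \<ge> 1" "x4 \<ge> 1" "x2 = 0 \<or> x2 \<ge> 1" "x3 = 0 \<or> x3 \<ge> 1" using Xe by auto
  moreover have "c \<in> {x1, x2, x3, x4, -x1, -x2, -x3, -x4}"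
    using g Xe by (cases l; cases r; cases e) (auto simp: tm_def sg_def Tmat_def mid_def)
  ultimately show ?thesis by auto
qed

lemma discr: assumes G: "M2 a b c d \<in> hecke_mats p" and p: "p \<ge> 3"
  and b: "\<bar>b\<bar> < 1" and c: "\<bar>c\<bar> < 1"
  shows "M2 a b c d = mid \<or> M2 a b c d = mneg mid"
proof -
  have c0: "c = 0" using key_c[OF G p] c by auto
  have det: "a * d = 1" using hecke_det[OF G] c0 by simp
  have "mmul (mmul (M2 a b c d) Tmat) (minv (M2 a b c d)) \<in> hecke_mats p"
    by (intro hecke_mmul hecke_minv hecke_gens G)
  hence "mmul (mmul (M2 a b c d) Tmat) (minv (M2 a b c d)) = M2 (b*d) (- (a * a) - b * b) (d*d) (-b*d)"
    and G1: "M2 (b*d) (- (a * a) - b * b) (d*d) (-b*d) \<in> hecke_mats p"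
    using c0 by (auto simp: Tmat_def algebra_simps)
  have d2: "d*d \<ge> 1"
  proof -
    have "d*d \<noteq> 0" using det by auto
    moreover have "\<bar>d*d\<bar> = d*d" by simp
    ultimately show ?thesis using key_c[OF G1 p] by auto
  qed
  have "mmul (mmul (minv (M2 a b c d)) Tmat) (M2 a b c d) \<in> hecke_mats p"
    by (intro hecke_mmul hecke_minv hecke_gens G)
  hence G2: "M2 (-b*a) (-b*b - d*d) (a*a) (a*b) \<in> hecke_mats p"
    using c0 by (auto simp: Tmat_def algebra_simps)
  have a2: "a*a \<ge> 1"
  proof -
    have "a*a \<noteq> 0" using det by auto
    moreover have "\<bar>a*a\<bar> = a*a" by simp
    ultimately show ?thesis using key_c[OF G2 p] by auto
  qed
  have e1: "(a*a)*(d*d) = 1" using det by (simp add: algebra_simps)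
  have "(a*a)*1 \<le> (a*a)*(d*d)" using d2 by (intro mult_left_mono) auto
  hence aa: "a*a = 1" using a2 e1 by simp
  have "a*(d-a) = 0" using det aa by (simp add: algebra_simps)
  hence ad: "d = a" using det by auto
  have "mmul (mmul Tmat (M2 a b c d)) (minv Tmat) \<in> hecke_mats p"
    by (intro hecke_mmul hecke_minv hecke_gens G)
  hence G3: "M2 d 0 (-b) a \<in> hecke_mats p" using c0 by (simp add: Tmat_def)
  have b0: "b = 0" using key_c[OF G3 p] b by auto
  have "a = 1 \<or> a = -1" using aa by (simp add: square_eq_1_iff)
  thus ?thesis using ad b0 c0 by (auto simp: mid_def)
qed

lemma hyp_c_ne0: assumes G: "M2 a b c d \<in> hecke_mats p" and p: "p \<ge> 3"
  and h: "\<bar>a + d\<bar> > 2" shows "c \<noteq> 0"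
proof
  assume c0: "c = 0"
  have det: "a * d = 1" using hecke_det[OF G] c0 by simp
  have "mmul (mmul (M2 a b c d) Tmat) (minv (M2 a b c d)) \<in> hecke_mats p"
    by (intro hecke_mmul hecke_minv hecke_gens G)
  hence G1: "M2 (b*d) (- (a * a) - b * b) (d*d) (-b*d) \<in> hecke_mats p"
    using c0 by (auto simp: Tmat_def algebra_simps)
  have d2: "d*d \<ge> 1"
  proof -
    have "d*d \<noteq> 0" using det by auto
    moreover have "\<bar>d*d\<bar> = d*d" by simp
    ultimately show ?thesis using key_c[OF G1 p] by auto
  qed
  have "mmul (mmul (minv (M2 a b c d)) Tmat) (M2 a b c d) \<in> hecke_mats p"
    by (intro hecke_mmul hecke_minv hecke_gens G)
  hence G2: "M2 (-b*a) (-b*b - d*d) (a*a) (a*b) \<in> hecke_mats p"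
    using c0 by (auto simp: Tmat_def algebra_simps)
  have a2: "a*a \<ge> 1"
  proof -
    have "a*a \<noteq> 0" using det by auto
    moreover have "\<bar>a*a\<bar> = a*a" by simp
    ultimately show ?thesis using key_c[OF G2 p] by auto
  qed
  have e1: "(a*a)*(d*d) = 1" using det by (simp add: algebra_simps)
  have "(a*a)*1 \<le> (a*a)*(d*d)" using d2 by (intro mult_left_mono) auto
  hence aa: "a*a = 1" using a2 e1 by simp
  have "a*(d-a) = 0" using det aa by (simp add: algebra_simps)
  hence ad: "d = a" using det by auto
  have "a = 1 \<or> a = -1" using aa by (simp add: square_eq_1_iff)
  thus False using ad h by auto
qed

fun nu :: "mat2 \<Rightarrow> real \<Rightarrow> real" where "nu (M2 a b c d) x = c*x + d"

abbreviation fx :: "mat2 \<Rightarrow> real \<Rightarrow> bool" where "fx M x \<equiv> moeb M (Some x) = Some x"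

lemma fix_iff: "fx (M2 a b c d) x \<longleftrightarrow> c*x+d \<noteq> 0 \<and> a*x + b = x*(c*x+d)"
  by (auto simp: field_simps)

lemma fx_mmul: assumes "fx A x" "fx B x"
  shows "fx (mmul A B) x" "nu (mmul A B) x = nu A x * nu B x"
proof -
  obtain a b c d where A: "A = M2 a b c d" by (cases A)
  obtain e f g h where B: "B = M2 e f g h" by (cases B)
  have h1: "c*x+d \<noteq> 0" "a*x + b = x*(c*x+d)" using assms(1) A fix_iff by auto
  have h2: "g*x+h \<noteq> 0" "e*x + f = x*(g*x+h)" using assms(2) B fix_iff by auto
  have n: "(c*e+d*g)*x + (c*f+d*h) = (c*x+d)*(g*x+h)"
  proof -
    have "(c*e+d*g)*x + (c*f+d*h) = c*(e*x+f) + d*(g*x+h)" by (simp add: algebra_simps)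
    also have "\<dots> = (c*x+d)*(g*x+h)" using h2(2) by (simp add: algebra_simps)
    finally show ?thesis .
  qed
  have m: "(a*e+b*g)*x + (a*f+b*h) = x*((c*x+d)*(g*x+h))"
  proof -
    have "(a*e+b*g)*x + (a*f+b*h) = a*(e*x+f) + b*(g*x+h)" by (simp add: algebra_simps)
    also have "\<dots> = (a*x+b)*(g*x+h)" using h2(2) by (simp add: algebra_simps)
    also have "\<dots> = x*((c*x+d)*(g*x+h))" using h1(2) by (simp add: algebra_simps)
    finally show ?thesis .
  qed
  show "fx (mmul A B) x" unfolding A B mmul.simps fix_iff n m using h1(1) h2(1) by simp
  show "nu (mmul A B) x = nu A x * nu B x" unfolding A B mmul.simps nu.simps using n by simp
qed

lemma fx_minv: assumes "mdet A = 1" "fx A x"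
  shows "fx (minv A) x" "nu (minv A) x = 1 / nu A x"
proof -
  obtain a b c d where A: "A = M2 a b c d" by (cases A)
  have h1: "c*x+d \<noteq> 0" "a*x + b = x*(c*x+d)" and det: "a*d - b*c = 1" using assms A fix_iff by auto
  have k: "(a - c*x)*(c*x+d) = 1"
  proof -
    have "(a - c*x)*(c*x+d) = a*d - c*(c*x*x + d*x - a*x)" by (simp add: algebra_simps)
    also have "c*x*x + d*x - a*x = b" using h1(2) by (simp add: algebra_simps)
    finally show ?thesis using det by (simp add: algebra_simps)
  qed
  have k2: "-c*x + a = 1/(c*x+d)" using k h1(1) by (simp add: field_simps)
  have ne: "-c*x + a \<noteq> 0" using k by auto
  have "d*x - b = x*(-c*x + a)" using h1(2) by (simp add: algebra_simps)
  thus "fx (minv A) x" using ne A by (simp add: fix_iff del: moeb.simps)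
  show "nu (minv A) x = 1 / nu A x" using k2 A by simp
qed

lemma fx_mneg: assumes "fx A x" shows "fx (mneg A) x" "nu (mneg A) x = - nu A x"
proof -
  obtain a b c d where A: "A = M2 a b c d" by (cases A)
  have h1: "c*x+d \<noteq> 0" "a*x + b = x*(c*x+d)" using assms A fix_iff by auto
  have "-c*x + -d \<noteq> 0" "-a*x + -b = x*(-c*x + -d)" using h1 by (auto simp: algebra_simps)
  thus "fx (mneg A) x" using A by (simp add: fix_iff del: moeb.simps)
  show "nu (mneg A) x = - nu A x" using A by simp
qed

lemma fx_mid: "fx mid x" "nu mid x = 1" by (auto simp: mid_def)

lemma fx_trace: assumes "mdet A = 1" "fx A x" shows "mtrace A = nu A x + 1 / nu A x"
proof -
  obtain a b c d where A: "A = M2 a b c d" by (cases A)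
  have h1: "c*x+d \<noteq> 0" "a*x + b = x*(c*x+d)" and det: "a*d - b*c = 1" using assms A fix_iff by auto
  have k: "(a - c*x)*(c*x+d) = 1"
  proof -
    have "(a - c*x)*(c*x+d) = a*d - c*(c*x*x + d*x - a*x)" by (simp add: algebra_simps)
    also have "c*x*x + d*x - a*x = b" using h1(2) by (simp add: algebra_simps)
    finally show ?thesis using det by (simp add: algebra_simps)
  qed
  have "a - c*x = 1/(c*x+d)" using k h1(1) by (simp add: field_simps)
  thus ?thesis using A by simp
qed

lemma frac_aux: assumes "(y::real) \<noteq> 0"
  shows "(a*z + b*y) / (c*z + d*y) = (a*(z/y) + b) / (c*(z/y) + d)"
proof -
  have 1: "a*(z/y) + b = (a*z + b*y)/y" using assms by (simp add: field_simps)
  have 2: "c*(z/y) + d = (c*z + d*y)/y" using assms by (simp add: field_simps)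
  show ?thesis unfolding 1 2 using assms by simp
qed

lemma moeb_mmul: assumes "mdet B \<noteq> 0"
  shows "moeb (mmul A B) (Some x) = moeb A (moeb B (Some x))"
proof -
  obtain a b c d where A: "A = M2 a b c d" by (cases A)
  obtain e f g h where B: "B = M2 e f g h" by (cases B)
  have det: "e*h - f*g \<noteq> 0" using assms B by simp
  have n: "(c*e+d*g)*x + (c*f+d*h) = c*(e*x+f) + d*(g*x+h)" by (simp add: algebra_simps)
  have m: "(a*e+b*g)*x + (a*f+b*h) = a*(e*x+f) + b*(g*x+h)" by (simp add: algebra_simps)
  show ?thesis
  proof (cases "g*x+h = 0")
    case True
    have ne: "e*x+f \<noteq> 0"
    proof
      assume "e*x+f = 0"
      hence "f = -e*x" "h = -g*x" using True by (auto simp: algebra_simps)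
      thus False using det by (simp add: algebra_simps)
    qed
    have ne': "c*(e*x+f) = 0 \<longleftrightarrow> c = 0" using ne by simp
    have q: "c \<noteq> 0 \<Longrightarrow> a*(e*x+f) / (c*(e*x+f)) = a / c" using ne by simp
    show ?thesis using True ne' q unfolding A B mmul.simps moeb.simps n m by simp
  next
    case False
    show ?thesis
    proof (cases "c*(e*x+f)/(g*x+h) + d = 0")
      case True
      hence "c*(e*x+f) + d*(g*x+h) = 0" using False by (simp add: field_simps)
      thus ?thesis using True False unfolding A B mmul.simps moeb.simps n m
        by (simp add: field_simps)
    next
      case F2: False
      hence ne: "c*(e*x+f) + d*(g*x+h) \<noteq> 0" using False by (simp add: field_simps)
      have "(a*(e*x+f) + b*(g*x+h)) / (c*(e*x+f) + d*(g*x+h))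
          = (a*((e*x+f)/(g*x+h)) + b) / (c*((e*x+f)/(g*x+h)) + d)"
        using False by (rule frac_aux)
      moreover have "moeb (mmul A B) (Some x) = Some ((a*(e*x+f) + b*(g*x+h)) / (c*(e*x+f) + d*(g*x+h)))"
        unfolding A B mmul.simps moeb.simps n m using ne by simp
      moreover have "moeb A (moeb B (Some x)) = Some ((a*((e*x+f)/(g*x+h)) + b) / (c*((e*x+f)/(g*x+h)) + d))"
        unfolding A B using False F2 by simp
      ultimately show ?thesis by simp
    qed
  qed
qed

definition Wm :: "real \<Rightarrow> real \<Rightarrow> mat2" where
  "Wm x t = M2 (1 + t*x) (-(t*x*x)) t (1 - t*x)"

lemma conj_W: assumes "mdet M0 = 1" "fx M0 x"
  shows "mmul (mmul (minv M0) (Wm x t)) M0 = Wm x (t / (nu M0 x)^2)"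
proof -
  obtain a0 b0 c0 d0 where A: "M0 = M2 a0 b0 c0 d0" by (cases M0)
  define m where "m = c0*x + d0"
  have h1: "m \<noteq> 0" "a0*x + b0 = x*m" and det: "a0*d0 - b0*c0 = 1"
    using assms A fix_iff m_def by auto
  have k: "(a0 - c0*x)*m = 1"
  proof -
    have "(a0 - c0*x)*m = a0*d0 - c0*(c0*x*x + d0*x - a0*x)" by (simp add: m_def algebra_simps)
    also have "c0*x*x + d0*x - a0*x = b0" using h1(2) by (simp add: m_def algebra_simps)
    finally show ?thesis using det by (simp add: algebra_simps)
  qed
  have ea: "a0 = 1/m + c0*x" using k h1(1) by (simp add: field_simps)
  have ed: "d0 = m - c0*x" by (simp add: m_def)
  have eb: "b0 = x*m - a0*x" using h1(2) by simp
  show ?thesis unfolding A Wm_def nu.simps m_def[symmetric] using h1(1)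
    by (simp add: eb ea ed field_simps) (simp add: algebra_simps power2_eq_square)
qed

lemma parab: assumes p: "p \<ge> 3" and G0: "M0 \<in> hecke_mats p" and f0: "fx M0 x"
  and mu: "\<bar>nu M0 x\<bar> > 1" and GY: "Y \<in> hecke_mats p" and fY: "fx Y x" and nY: "nu Y x = 1"
  shows "Y = mid"
proof -
  obtain a b c d where Y: "Y = M2 a b c d" by (cases Y)
  have h1: "a*x + b = x*(c*x+d)" "c*x + d = 1" using fY nY Y fix_iff by auto
  have tr: "a + d = 2" using fx_trace[OF hecke_det[OF GY] fY] nY Y by simp
  have ed: "d = 1 - c*x" using h1 by simp
  have ea: "a = 1 + c*x" using tr ed by simp
  have "b = x*(c*x+d) - a*x" using h1(1) by simp
  hence eb: "b = -(c*x*x)" using ea ed by (simp add: algebra_simps)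
  have YW: "Y = Wm x c" using Y ea eb ed unfolding Wm_def by simp
  define m where "m = nu M0 x"
  define F where "F = (\<lambda>X. mmul (mmul (minv M0) X) M0)"
  have d0: "mdet M0 = 1" using hecke_det[OF G0] .
  have seq: "(F ^^ n) Y \<in> hecke_mats p \<and> (F ^^ n) Y = Wm x (c / (m^2)^n)" for n
  proof (induction n)
    case 0 show ?case using GY YW by simp
  next
    case (Suc n)
    have "(F ^^ Suc n) Y = F ((F ^^ n) Y)" by simp
    moreover have "F ((F ^^ n) Y) \<in> hecke_mats p" using Suc G0 unfolding F_def
      by (intro hecke_mmul hecke_minv) auto
    moreover have "F ((F ^^ n) Y) = Wm x (c / (m^2)^Suc n)"
      using Suc conj_W[OF d0 f0, of "c / (m^2)^n"] unfolding F_def m_def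
      by (simp add: field_simps)
    ultimately show ?case by simp
  qed
  have m2: "m^2 > 1"
  proof -
    have "1*1 < \<bar>m\<bar>*\<bar>m\<bar>" using mu unfolding m_def by (intro mult_strict_mono) auto
    thus ?thesis by (simp add: power2_eq_square abs_mult_self_eq)
  qed
  obtain n where n: "\<bar>c\<bar> * (1 + x*x) < (m^2)^n" using real_arch_pow[OF m2] by blast
  define t where "t = c / (m^2)^n"
  have pos: "(m^2)^n > 0" by (rule zero_less_power) (use m2 in linarith)
  have tb: "\<bar>t\<bar> * (1 + x*x) < 1" using n pos unfolding t_def
    by (simp add: abs_divide field_simps)
  have xx: "x*x \<ge> 0" by simp
  have t1: "\<bar>t\<bar> < 1"
  proof -
    have "\<bar>t\<bar> * 1 \<le> \<bar>t\<bar> * (1 + x*x)" using xx by (intro mult_left_mono) auto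
    thus ?thesis using tb by simp
  qed
  have t2: "\<bar>-(t*x*x)\<bar> < 1"
  proof -
    have "\<bar>-(t*x*x)\<bar> = \<bar>t\<bar> * (x*x)" by (simp add: abs_mult)
    also have "\<dots> \<le> \<bar>t\<bar> * (1 + x*x)" by (intro mult_left_mono) auto
    finally show ?thesis using tb by simp
  qed
  have Gt: "Wm x t \<in> hecke_mats p" using seq[of n] unfolding t_def by metis
  hence "Wm x t = mid \<or> Wm x t = mneg mid"
    using discr[of "1 + t*x" "-(t*x*x)" t "1 - t*x" p] p t1 t2 unfolding Wm_def by simp
  hence "t = 0" unfolding Wm_def mid_def by auto
  hence "c = 0" using pos m2 unfolding t_def by auto
  thus ?thesis using YW unfolding Wm_def mid_def by simp
qed

lemma mpow_Suc': "mpow M (Suc n) = mmul (mpow M n) M"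
  by (induction n) (simp_all add: mmul_assoc[symmetric])

lemma mpow_hecke: "M \<in> hecke_mats p \<Longrightarrow> mpow M n \<in> hecke_mats p"
  by (induction n) (simp_all add: hecke_mats.hm_id hecke_mmul)

lemma mpow_fx: "fx M x \<Longrightarrow> fx (mpow M n) x \<and> nu (mpow M n) x = (nu M x)^n"
  by (induction n) (simp_all add: fx_mid fx_mmul)

lemma minv_mpow: "minv (mpow M n) = mpow (minv M) n"
  by (induction n) (simp_all add: minv_mmul mpow_Suc'[symmetric])

lemma mdet_mpow: "mdet M = 1 \<Longrightarrow> mdet (mpow M n) = 1"
  by (induction n) (simp_all add: mdet_mmul mid_def)

lemma minv_left': "mdet A = 1 \<Longrightarrow> mmul (minv A) (mmul A B) = B"
  by (simp add: mmul_assoc[symmetric] minv_left)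

lemma abs_nu_trace: assumes "\<bar>v\<bar> > (1::real)" shows "\<bar>v + 1/v\<bar> > 2"
proof (cases "v > 0")
  case True
  hence "v + 1/v - 2 = (v - 1)^2 / v" by (simp add: field_simps power2_eq_square)
  moreover have "(v - 1)^2 / v > 0" using True assms by simp
  ultimately show ?thesis using True by auto
next
  case False
  hence "-v + 1/(-v) - 2 = (-v - 1)^2 / (-v)" using assms by (simp add: field_simps power2_eq_square)
  moreover have "(-v - 1)^2 / (-v) > 0" using False assms by (intro divide_pos_pos) auto
  ultimately show ?thesis using False by (auto simp: abs_if)
qed

lemma trace_abs_nu: assumes "\<bar>v + 1/v\<bar> > (2::real)" shows "\<bar>v\<bar> \<noteq> 1"
  using assms by (auto simp: abs_if split: if_splits)

locale hctx =
  fixes p :: nat and x :: real and M0 :: mat2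
  assumes p3: "p \<ge> 3" and G0: "M0 \<in> hecke_mats p" and f0: "fx M0 x" and mu: "\<bar>nu M0 x\<bar> > 1"
begin

lemma comm: assumes GN: "N \<in> hecke_mats p" and fN: "fx N x"
  shows "mmul N M0 = mmul M0 N"
proof -
  define Y where "Y = mmul (mmul (mmul N M0) (minv N)) (minv M0)"
  have dN: "mdet N = 1" using hecke_det[OF GN] .
  have d0: "mdet M0 = 1" using hecke_det[OF G0] .
  have GY: "Y \<in> hecke_mats p" unfolding Y_def by (intro hecke_mmul hecke_minv GN G0)
  have fi: "fx (minv N) x" "nu (minv N) x = 1 / nu N x" using fx_minv[OF dN fN] by auto
  have fi0: "fx (minv M0) x" "nu (minv M0) x = 1 / nu M0 x" using fx_minv[OF d0 f0] by auto
  have fY: "fx Y x" unfolding Y_def by (intro fx_mmul fi fi0 fN f0)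
  have nN: "nu N x \<noteq> 0" using fN by (cases N) (auto simp: fix_iff simp del: moeb.simps)
  have n0: "nu M0 x \<noteq> 0" using mu by auto
  have "nu Y x = nu N x * nu M0 x * (1 / nu N x) * (1 / nu M0 x)"
    unfolding Y_def using fx_mmul fi fi0 fN f0 by (simp add: fx_mmul)
  hence nY: "nu Y x = 1" using nN n0 by simp
  have "Y = mid" using parab[OF p3 G0 f0 mu GY fY nY] .
  hence "mmul Y (mmul M0 N) = mmul M0 N" by simp
  moreover have "mmul Y (mmul M0 N) = mmul N M0"
    unfolding Y_def by (simp add: mmul_assoc minv_left'[OF d0] minv_left[OF dN])
  ultimately show ?thesis by simp
qed

lemma M0_c: obtains a0 b0 c0 d0 where "M0 = M2 a0 b0 c0 d0" "c0 \<noteq> 0"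
proof -
  obtain a0 b0 c0 d0 where A: "M0 = M2 a0 b0 c0 d0" by (cases M0)
  have "mtrace M0 = nu M0 x + 1 / nu M0 x" using fx_trace[OF hecke_det[OF G0] f0] .
  hence "\<bar>a0 + d0\<bar> > 2" using abs_nu_trace[OF mu] A by simp
  hence "c0 \<noteq> 0" using hyp_c_ne0[of a0 b0 c0 d0 p] G0 A p3 by simp
  thus ?thesis using that A by blast
qed

lemma comm_form: assumes GN: "N \<in> hecke_mats p" and fN: "fx N x"
    and N: "N = M2 p' q r s" and A: "M0 = M2 a0 b0 c0 d0"
  shows "r * (nu M0 x - 1 / nu M0 x) = c0 * (nu N x - 1 / nu N x)" "q * c0 = b0 * r"
proof -
  have cm: "mmul N M0 = mmul M0 N" using comm[OF GN fN] .
  hence e1: "p'*a0 + q*c0 = a0*p' + b0*r" and e2: "r*a0 + s*c0 = c0*p' + d0*r"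
    using N A by simp_all
  show "q * c0 = b0 * r" using e1 by simp
  have t0: "a0 + d0 = nu M0 x + 1 / nu M0 x" using fx_trace[OF hecke_det[OF G0] f0] A by simp
  have tN: "p' + s = nu N x + 1 / nu N x" using fx_trace[OF hecke_det[OF GN] fN] N by simp
  have "c0 * (nu N x - 1 / nu N x) = c0 * (2 * nu N x - (p' + s))" using tN by simp
  also have "\<dots> = c0 * (2*(r*x+s) - p' - s)" using N by simp
  also have "\<dots> = r * (2*(c0*x + d0) - (a0 + d0))" using e2 by (simp add: algebra_simps)
  also have "\<dots> = r * (nu M0 x - 1 / nu M0 x)" using t0 A by simp
  finally show "r * (nu M0 x - 1 / nu M0 x) = c0 * (nu N x - 1 / nu N x)" by simp
qed

lemma delta: obtains \<delta> where "\<delta> > 0"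
  "\<And>N. N \<in> hecke_mats p \<Longrightarrow> fx N x \<Longrightarrow> \<bar>nu N x\<bar> > 1 \<Longrightarrow> \<bar>nu N x\<bar> \<ge> 1 + \<delta>"
proof -
  obtain a0 b0 c0 d0 where A: "M0 = M2 a0 b0 c0 d0" and c0: "c0 \<noteq> 0" using M0_c by blast
  define \<mu> where "\<mu> = nu M0 x"
  define D where "D = \<bar>\<mu> - 1/\<mu>\<bar>"
  have "\<bar>\<mu>\<bar> > 1" using mu by (simp add: \<mu>_def)
  hence "1*1 < \<bar>\<mu>\<bar>*\<bar>\<mu>\<bar>" by (intro mult_strict_mono) auto
  hence mm: "\<mu>*\<mu> > 1" by (simp add: abs_mult_self_eq)
  hence "\<mu> \<noteq> 0" by auto
  hence "\<mu> - 1/\<mu> = (\<mu>*\<mu> - 1)/\<mu>" by (simp add: field_simps)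
  hence "\<mu> - 1/\<mu> \<noteq> 0" using mm \<open>\<mu> \<noteq> 0\<close> by simp
  hence Dp: "D > 0" unfolding D_def by simp
  define K where "K = (\<bar>b0\<bar> + \<bar>c0\<bar> + 1) / D"
  have Kp: "K > 0" using Dp unfolding K_def by simp
  define \<delta> where "\<delta> = 1 / (4 * K)"
  have dp: "\<delta> > 0" using Kp by (simp add: \<delta>_def)
  have main: "\<bar>nu N x\<bar> \<ge> 1 + \<delta>"
    if GN: "N \<in> hecke_mats p" and fN: "fx N x" and gt: "\<bar>nu N x\<bar> > 1" for N
  proof (rule ccontr)
    assume "\<not> \<bar>nu N x\<bar> \<ge> 1 + \<delta>"
    hence lt: "\<bar>nu N x\<bar> < 1 + \<delta>" by simp
    obtain p' q r s where N: "N = M2 p' q r s" by (cases N)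
    define v where "v = nu N x"
    have cf: "r * (\<mu> - 1/\<mu>) = c0 * (v - 1/v)" "q * c0 = b0 * r"
      using comm_form[OF GN fN N A] by (simp_all add: \<mu>_def v_def)
    have av: "\<bar>v\<bar> > 1" "\<bar>v\<bar> < 1 + \<delta>" using gt lt by (simp_all add: v_def)
    have bv: "\<bar>v - 1/v\<bar> < 2 * \<delta>"
    proof -
      define w where "w = \<bar>v\<bar>"
      have w1: "w > 1" using av(1) by (simp add: w_def)
      have "1/w < 1" using w1 by simp
      hence w: "1/w < w" using w1 by linarith
      have "\<bar>v - 1/v\<bar> = w - 1/w"
      proof (cases "v > 0")
        case True
        hence "v = w" by (simp add: w_def)
        thus ?thesis using w by simp
      next
        case False
        hence "v = -w" by (simp add: w_def)
        hence "v - 1/v = -(w - 1/w)" by simp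
        thus ?thesis using w by simp
      qed
      hence "\<bar>v - 1/v\<bar> = \<bar>v\<bar> - 1/\<bar>v\<bar>" by (simp add: w_def)
      also have "\<dots> \<le> 2 * (\<bar>v\<bar> - 1)"
      proof -
        have "(\<bar>v\<bar> - 1)^2 \<ge> 0" by simp
        moreover have "\<bar>v\<bar> + 1/\<bar>v\<bar> - 2 = (\<bar>v\<bar> - 1)^2 / \<bar>v\<bar>" using av(1)
          by (simp add: field_simps power2_eq_square)
        moreover have "(\<bar>v\<bar> - 1)^2 / \<bar>v\<bar> \<ge> 0" by simp
        ultimately have "\<bar>v\<bar> + 1/\<bar>v\<bar> \<ge> 2" by linarith
        thus ?thesis by simp
      qed
      also have "\<dots> < 2 * \<delta>" using av(2) by simp
      finally show ?thesis .
    qed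
    have r_eq: "\<bar>r\<bar> = \<bar>c0\<bar> * \<bar>v - 1/v\<bar> / D"
    proof -
      have "\<bar>r * (\<mu> - 1/\<mu>)\<bar> = \<bar>c0 * (v - 1/v)\<bar>" using cf(1) by simp
      hence "\<bar>r\<bar> * D = \<bar>c0\<bar> * \<bar>v - 1/v\<bar>" unfolding D_def abs_mult .
      thus ?thesis using Dp by (simp add: field_simps)
    qed
    have q_eq: "\<bar>q\<bar> = \<bar>b0\<bar> * \<bar>v - 1/v\<bar> / D"
    proof -
      have "\<bar>q * c0\<bar> = \<bar>b0 * r\<bar>" using cf(2) by simp
      hence "\<bar>q\<bar> * \<bar>c0\<bar> = \<bar>b0\<bar> * \<bar>r\<bar>" unfolding abs_mult .
      hence "\<bar>q\<bar> = \<bar>b0\<bar> * \<bar>r\<bar> / \<bar>c0\<bar>" using c0 by (simp add: field_simps)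
      thus ?thesis using r_eq c0 by simp
    qed
    have small: "(\<bar>b0\<bar> + \<bar>c0\<bar> + 1) * \<bar>v - 1/v\<bar> / D < 1"
    proof -
      have "(\<bar>b0\<bar> + \<bar>c0\<bar> + 1) * \<bar>v - 1/v\<bar> / D = K * \<bar>v - 1/v\<bar>" unfolding K_def by simp
      also have "\<dots> \<le> K * (2 * \<delta>)" using bv Kp by (intro mult_left_mono) auto
      also have "\<dots> = 1/2" using Kp unfolding \<delta>_def by simp
      finally have "(\<bar>b0\<bar> + \<bar>c0\<bar> + 1) * \<bar>v - 1/v\<bar> / D \<le> 1/2" .
      thus ?thesis by linarith
    qed
    have "\<bar>c0\<bar> * \<bar>v - 1/v\<bar> / D \<le> (\<bar>b0\<bar> + \<bar>c0\<bar> + 1) * \<bar>v - 1/v\<bar> / D"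
      using Dp by (intro divide_right_mono mult_right_mono) auto
    hence r1: "\<bar>r\<bar> < 1" using small r_eq by simp
    have "\<bar>b0\<bar> * \<bar>v - 1/v\<bar> / D \<le> (\<bar>b0\<bar> + \<bar>c0\<bar> + 1) * \<bar>v - 1/v\<bar> / D"
      using Dp by (intro divide_right_mono mult_right_mono) auto
    hence q1: "\<bar>q\<bar> < 1" using small q_eq by simp
    have "N = mid \<or> N = mneg mid" using discr[of p' q r s p] GN N p3 r1 q1 by simp
    hence "\<bar>v\<bar> = 1" unfolding v_def by (auto simp: mid_def)
    thus False using av by simp
  qed
  show ?thesis using that dp main by blast
qed

end

context hctx
begin

lemma nu_pm1: assumes GN: "N \<in> hecke_mats p" and fN: "fx N x" and a: "\<bar>nu N x\<bar> = 1"
  shows "N = mid \<or> N = mneg mid"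
proof (cases "nu N x = 1")
  case True
  thus ?thesis using parab[OF p3 G0 f0 mu GN fN] by simp
next
  case False
  hence "nu N x = -1" using a by auto
  hence "nu (mneg N) x = 1" using fx_mneg[OF fN] by simp
  hence "mneg N = mid" using parab[OF p3 G0 f0 mu hecke_mneg[OF GN] fx_mneg(1)[OF fN]] by simp
  hence "N = mneg mid" by (metis mneg_mneg)
  thus ?thesis by simp
qed

lemma min_exists: obtains M where "M \<in> hecke_mats p" "fx M x" "\<bar>nu M x\<bar> > 1"
  "\<And>N. N \<in> hecke_mats p \<Longrightarrow> fx N x \<Longrightarrow> \<bar>nu N x\<bar> > 1 \<Longrightarrow> \<bar>nu N x\<bar> \<ge> \<bar>nu M x\<bar>"
proof -
  obtain \<delta> where dp: "\<delta> > 0" and dl: "\<And>N. N \<in> hecke_mats p \<Longrightarrow> fx N x \<Longrightarrow> \<bar>nu N x\<bar> > 1 \<Longrightarrow> \<bar>nu N x\<bar> \<ge> 1 + \<delta>"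
    using delta by blast
  define A where "A = {t. \<exists>N\<in>hecke_mats p. fx N x \<and> t = \<bar>nu N x\<bar> \<and> t > 1}"
  have ne: "A \<noteq> {}" using G0 f0 mu unfolding A_def by blast
  have lb: "t \<ge> 1 + \<delta>" if "t \<in> A" for t using that dl unfolding A_def by blast
  have bdd: "bdd_below A" using lb by (intro bdd_belowI) auto
  define m where "m = Inf A"
  have m1: "m \<ge> 1 + \<delta>" unfolding m_def using ne lb by (intro cInf_greatest) auto
  have mA: "m \<in> A"
  proof (rule ccontr)
    assume nA: "m \<notin> A"
    have "m < m * (1 + \<delta>)" using m1 dp by simp
    then obtain x1 where x1: "x1 \<in> A" "x1 < m * (1 + \<delta>)"
      using cInf_less_iff[OF ne bdd] unfolding m_def by blast
    have "m \<le> x1" using cInf_lower[OF x1(1) bdd] unfolding m_def .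
    hence "m < x1" using nA x1(1) by (cases "m = x1") auto
    then obtain x2 where x2: "x2 \<in> A" "x2 < x1"
      using cInf_less_iff[OF ne bdd] unfolding m_def by blast
    have mx2: "m \<le> x2" using cInf_lower[OF x2(1) bdd] unfolding m_def .
    obtain N1 where N1: "N1 \<in> hecke_mats p" "fx N1 x" "x1 = \<bar>nu N1 x\<bar>" "x1 > 1" using x1(1) unfolding A_def by blast
    obtain N2 where N2: "N2 \<in> hecke_mats p" "fx N2 x" "x2 = \<bar>nu N2 x\<bar>" "x2 > 1" using x2(1) unfolding A_def by blast
    define N where "N = mmul N1 (minv N2)"
    have GN: "N \<in> hecke_mats p" unfolding N_def by (intro hecke_mmul hecke_minv N1(1) N2(1))
    have fi: "fx (minv N2) x" "nu (minv N2) x = 1 / nu N2 x" using fx_minv[OF hecke_det[OF N2(1)] N2(2)] by auto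
    have fN: "fx N x" unfolding N_def using fx_mmul fi N1(2) by blast
    have "nu N x = nu N1 x * (1 / nu N2 x)" unfolding N_def using fx_mmul(2)[OF N1(2) fi(1)] fi(2) by simp
    hence nN: "\<bar>nu N x\<bar> = x1 / x2" using N1(3) N2(3) by (simp add: abs_mult abs_divide)
    have "x1 / x2 > 1" using x2 N2(4) by simp
    hence "x1 / x2 \<ge> 1 + \<delta>" using dl[OF GN fN] nN by simp
    moreover have "x1 < x2 * (1 + \<delta>)"
    proof -
      have "m * (1 + \<delta>) \<le> x2 * (1 + \<delta>)" using mx2 dp by (intro mult_right_mono) auto
      thus ?thesis using x1(2) by simp
    qed
    hence "x1 / x2 < 1 + \<delta>" using N2(4) by (simp add: field_simps)
    ultimately show False by simp
  qed
  then obtain M where M: "M \<in> hecke_mats p" "fx M x" "m = \<bar>nu M x\<bar>" "m > 1" unfolding A_def by blast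
  have "\<bar>nu N x\<bar> \<ge> \<bar>nu M x\<bar>" if "N \<in> hecke_mats p" "fx N x" "\<bar>nu N x\<bar> > 1" for N
  proof -
    have "\<bar>nu N x\<bar> \<in> A" using that unfolding A_def by blast
    thus ?thesis using cInf_lower[OF _ bdd] M(3) unfolding m_def by simp
  qed
  thus ?thesis using that M by auto
qed

lemma gen_exists: obtains M where "stab_generator p x M" "\<bar>nu M x\<bar> > 1"
proof -
  obtain M where M: "M \<in> hecke_mats p" "fx M x" "\<bar>nu M x\<bar> > 1"
    and mn: "\<And>N. N \<in> hecke_mats p \<Longrightarrow> fx N x \<Longrightarrow> \<bar>nu N x\<bar> > 1 \<Longrightarrow> \<bar>nu N x\<bar> \<ge> \<bar>nu M x\<bar>"
    using min_exists by blast
  define m where "m = \<bar>nu M x\<bar>"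
  have dM: "mdet M = 1" using hecke_det[OF M(1)] .
  have fiM: "fx (minv M) x" "nu (minv M) x = 1 / nu M x" using fx_minv[OF dM M(2)] by auto
  have pos: "\<forall>N. N \<in> hecke_mats p \<longrightarrow> fx N x \<longrightarrow> 1 \<le> \<bar>nu N x\<bar> \<longrightarrow> \<bar>nu N x\<bar> < m^k
        \<longrightarrow> (\<exists>n. N = mpow M n \<or> N = mneg (mpow M n))" for k
  proof (induction k)
    case 0 show ?case by auto
  next
    case (Suc k)
    show ?case
    proof (intro allI impI)
      fix N assume GN: "N \<in> hecke_mats p" and fN: "fx N x" and g1: "1 \<le> \<bar>nu N x\<bar>"
        and lt: "\<bar>nu N x\<bar> < m ^ Suc k"
      show "\<exists>n. N = mpow M n \<or> N = mneg (mpow M n)"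
      proof (cases "\<bar>nu N x\<bar> < m")
        case True
        hence "\<not> \<bar>nu N x\<bar> > 1" using mn[OF GN fN] m_def by force
        hence "\<bar>nu N x\<bar> = 1" using g1 by simp
        hence "N = mpow M 0 \<or> N = mneg (mpow M 0)" using nu_pm1[OF GN fN] by simp
        thus ?thesis by blast
      next
        case False
        define N' where "N' = mmul N (minv M)"
        have GN': "N' \<in> hecke_mats p" unfolding N'_def by (intro hecke_mmul hecke_minv GN M(1))
        have fN': "fx N' x" unfolding N'_def using fx_mmul fiM fN by blast
        have "nu N' x = nu N x * (1 / nu M x)" unfolding N'_def using fx_mmul(2)[OF fN fiM(1)] fiM(2) by simp
        hence nN': "\<bar>nu N' x\<bar> = \<bar>nu N x\<bar> / m" unfolding m_def by (simp add: abs_mult abs_divide)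
        have mp: "m > 0" using M(3) m_def by simp
        have "1 \<le> \<bar>nu N x\<bar> / m" using False mp by (simp add: le_divide_eq)
        hence "\<bar>nu N' x\<bar> \<ge> 1" using nN' by simp
        moreover have "\<bar>nu N' x\<bar> < m ^ k"
        proof -
          have "\<bar>nu N x\<bar> / m < m ^ k" using lt mp by (simp add: divide_less_eq mult.commute)
          thus ?thesis using nN' by simp
        qed
        ultimately obtain n where "N' = mpow M n \<or> N' = mneg (mpow M n)"
          using Suc.IH GN' fN' by blast
        moreover have "N = mmul N' M" unfolding N'_def by (simp add: mmul_assoc minv_left[OF dM])
        ultimately have "N = mpow M (Suc n) \<or> N = mneg (mpow M (Suc n))"
          by (auto simp del: mpow.simps simp add: mpow_Suc' mmul_mneg_left)
        thus ?thesis by blast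
      qed
    qed
  qed
  have m1: "m > 1" using M(3) m_def by simp
  have pos': "\<exists>n. N = mpow M n \<or> N = mneg (mpow M n)"
    if "N \<in> hecke_mats p" "fx N x" "1 \<le> \<bar>nu N x\<bar>" for N
  proof -
    obtain k where "\<bar>nu N x\<bar> < m ^ k" using real_arch_pow[OF m1] by blast
    thus ?thesis using pos that by blast
  qed
  have "\<exists>n::int. N = mzpow M n \<or> N = mneg (mzpow M n)"
    if GN: "N \<in> hecke_mats p" and fN: "fx N x" for N
  proof (cases "1 \<le> \<bar>nu N x\<bar>")
    case True
    then obtain n where "N = mpow M n \<or> N = mneg (mpow M n)" using pos' GN fN by blast
    hence "N = mzpow M (int n) \<or> N = mneg (mzpow M (int n))" by (simp add: mzpow_def)
    thus ?thesis by blast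
  next
    case False
    have dN: "mdet N = 1" using hecke_det[OF GN] .
    have fi: "fx (minv N) x" "nu (minv N) x = 1 / nu N x" using fx_minv[OF dN fN] by auto
    have nz: "nu N x \<noteq> 0" using fN by (cases N) (auto simp: fix_iff simp del: moeb.simps)
    have "\<bar>nu (minv N) x\<bar> = 1 / \<bar>nu N x\<bar>" using fi(2) by (simp add: abs_divide)
    moreover have "1 / \<bar>nu N x\<bar> \<ge> 1" using False nz by (simp add: le_divide_eq)
    ultimately have "\<bar>nu (minv N) x\<bar> \<ge> 1" by simp
    then obtain n where "minv N = mpow M n \<or> minv N = mneg (mpow M n)"
      using pos' hecke_minv[OF GN] fi(1) by blast
    hence "N = mpow (minv M) n \<or> N = mneg (mpow (minv M) n)"
      by (metis minv_minv minv_mneg minv_mpow)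
    moreover have "mzpow M (- int n) = mpow (minv M) n"
      by (cases "n = 0") (simp_all add: mzpow_def)
    ultimately show ?thesis by metis
  qed
  hence "stab_generator p x M" unfolding stab_generator_def using M by blast
  thus ?thesis using that M(3) by blast
qed

end

fun qroot :: "bqf \<Rightarrow> real" where
  "qroot (A, B, C) = (-B + sqrt (B^2 - 4*A*C)) / (2*A)"
fun qdisc :: "bqf \<Rightarrow> real" where
  "qdisc (A, B, C) = B^2 - 4*A*C"

lemma comp_disc: assumes "v1*v4 - v2*v3 = 1"
  shows "qdisc (bqf_comp (A, B, C) (M2 v1 v2 v3 v4)) = B^2 - 4*A*C"
proof -
  have "qdisc (bqf_comp (A, B, C) (M2 v1 v2 v3 v4)) = (B^2 - 4*A*C) * (v1*v4 - v2*v3)^2"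
    by (simp add: power2_eq_square algebra_simps)
  thus ?thesis using assms by simp
qed

lemma root_comp:
  assumes A: "A \<noteq> 0" and D: "B^2 - 4*A*C > 0" and det: "v1*v4 - v2*v3 = 1"
    and Q': "bqf_comp (A, B, C) (M2 v1 v2 v3 v4) = (A', B', C')" and A': "A' \<noteq> 0"
  shows "v1 - v3 * qroot (A, B, C) \<noteq> 0"
    "qroot (A', B', C') = (v4 * qroot (A, B, C) - v2) / (v1 - v3 * qroot (A, B, C))"
proof -
  define S where "S = sqrt (B^2 - 4*A*C)"
  have S2: "S^2 = B^2 - 4*A*C" using D unfolding S_def by simp
  have Sp: "S > 0" using D unfolding S_def by simp
  define r where "r = (-B + S) / (2*A)"
  define r' where "r' = (-B - S) / (2*A)"
  have eB: "B = -A*(r + r')" using A unfolding r_def r'_def by (simp add: field_simps)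
  have eS: "S = A*(r - r')" using A unfolding r_def r'_def by (simp add: field_simps)
  have eC: "C = A*r*r'"
  proof -
    have "A*r*r' = (B^2 - S^2) / (4*A)" using A unfolding r_def r'_def
      by (simp add: field_simps power2_eq_square)
    thus ?thesis using S2 A by (simp add: field_simps)
  qed
  have qr: "qroot (A, B, C) = r" unfolding r_def S_def by simp
  have eA': "A' = A*(v1 - r*v3)*(v1 - r'*v3)" using Q' unfolding eB eC
    by (simp add: power2_eq_square algebra_simps)
  have eB': "B' = A*((v1 - r*v3)*(v2 - r'*v4) + (v2 - r*v4)*(v1 - r'*v3))" using Q' unfolding eB eC
    by (simp add: algebra_simps)
  have n1: "v1 - r*v3 \<noteq> 0" "v1 - r'*v3 \<noteq> 0" using A' eA' by auto
  show "v1 - v3 * qroot (A, B, C) \<noteq> 0" using n1 qr by (simp add: mult.commute)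
  have dQ': "qdisc (A', B', C') = B^2 - 4*A*C" using comp_disc[OF det, of A B C] unfolding Q' .
  hence sq': "sqrt (B'^2 - 4*A'*C') = S" unfolding S_def by simp
  have key: "-B' + A*(r - r')*(v1*v4 - v2*v3) = -2*A*(v2 - r*v4)*(v1 - r'*v3)"
    unfolding eB' by (simp add: algebra_simps)
  hence key2: "-B' + S = -2*A*(v2 - r*v4)*(v1 - r'*v3)" using det eS by simp
  have "qroot (A', B', C') = (-B' + S) / (2*A')" using sq' by simp
  also have "\<dots> = (-2*A*(v2 - r*v4)*(v1 - r'*v3)) / (2*(A*(v1 - r*v3)*(v1 - r'*v3)))"
    using key2 eA' by simp
  also have "\<dots> = -(v2 - r*v4) / (v1 - r*v3)"
  proof -
    have g: "\<And>X Y Z. Y \<noteq> 0 \<Longrightarrow> Z \<noteq> 0 \<Longrightarrow> (-2*A*X*Y)/(2*(A*Z*Y)) = -X/(Z::real)"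
      using A by (simp add: field_simps)
    show ?thesis by (rule g) (use n1 in auto)
  qed
  also have "\<dots> = (v4*r - v2) / (v1 - v3*r)" by (simp add: algebra_simps)
  finally show "qroot (A', B', C') = (v4 * qroot (A, B, C) - v2) / (v1 - v3 * qroot (A, B, C))"
    using qr by simp
qed

fun qf :: "mat2 \<Rightarrow> bqf" where "qf (M2 a b c d) = (c, d - a, -b)"

lemma qf_conj: "qf (mmul (mmul (minv V) M) V) = bqf_comp (qf M) V"
  by (cases M; cases V) (simp add: power2_eq_square algebra_simps)

lemma trace_conj: assumes det: "mdet V = 1"
  shows "mtrace (mmul (mmul (minv V) M) V) = mtrace M"
proof -
  obtain a b c d where M: "M = M2 a b c d" by (cases M)
  obtain v1 v2 v3 v4 where V: "V = M2 v1 v2 v3 v4" by (cases V)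
  have dt: "v1*v4 - v2*v3 = 1" using det V by simp
  have "mtrace (mmul (mmul (minv V) M) V) = (a + d) * (v1*v4 - v2*v3)"
    unfolding M V by (simp add: algebra_simps)
  thus ?thesis using dt M by simp
qed

lemma qroot_qf: assumes "mdet (M2 a b c d) = 1"
  shows "qroot (qf (M2 a b c d)) = (a - d + sqrt ((a + d)^2 - 4)) / (2*c)"
proof -
  have "(d - a)^2 - 4*c*(-b) = (a+d)^2 - 4" using assms by (simp add: power2_eq_square algebra_simps)
  thus ?thesis by simp
qed

lemma quad_roots: assumes c: "(c::real) \<noteq> 0" and e: "c*x*x + B*x + C = 0" and D: "B^2 - 4*c*C \<ge> 0"
  shows "x = (-B + sqrt (B^2 - 4*c*C)) / (2*c) \<or> x = (-B - sqrt (B^2 - 4*c*C)) / (2*c)"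
proof -
  have "(2*c*x + B)^2 = B^2 - 4*c*C" using e by (simp add: power2_eq_square algebra_simps)
    (metis (no_types, lifting) add.commute add_diff_cancel_right' distrib_left mult.commute mult.left_commute mult_zero_right)?
  hence "\<bar>2*c*x + B\<bar> = sqrt (B^2 - 4*c*C)" by (metis real_sqrt_abs)
  hence "2*c*x + B = sqrt (B^2 - 4*c*C) \<or> 2*c*x + B = - sqrt (B^2 - 4*c*C)"
    by (cases "0 \<le> 2*c*x + B") auto
  thus ?thesis using c by (auto simp: field_simps)
qed

lemma mzpow_minv: "mzpow (minv M) k = mzpow M (-k)"
  by (cases "k = 0") (auto simp: mzpow_def)

lemma stab_gen_minv: assumes "stab_generator p x M" shows "stab_generator p x (minv M)"
proof -
  have G: "M \<in> hecke_mats p" and f: "fx M x"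
    and g: "\<And>N. N \<in> hecke_mats p \<Longrightarrow> fx N x \<Longrightarrow> \<exists>n::int. N = mzpow M n \<or> N = mneg (mzpow M n)"
    using assms unfolding stab_generator_def by auto
  have "\<exists>n::int. N = mzpow (minv M) n \<or> N = mneg (mzpow (minv M) n)"
    if hN: "N \<in> hecke_mats p" "fx N x" for N
  proof -
    obtain n where "N = mzpow M n \<or> N = mneg (mzpow M n)" using g[OF hN] by blast
    hence "N = mzpow (minv M) (-n) \<or> N = mneg (mzpow (minv M) (-n))" by (simp add: mzpow_minv)
    thus ?thesis by blast
  qed
  thus ?thesis unfolding stab_generator_def
    using hecke_minv[OF G] fx_minv(1)[OF hecke_det[OF G] f] by blast
qed

definition cj :: "mat2 \<Rightarrow> mat2 \<Rightarrow> mat2" where "cj V M = mmul (mmul (minv V) M) V"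

lemma cj_mpow: assumes "mdet V = 1" shows "mpow (cj V M) n = cj V (mpow M n)"
proof (induction n)
  case 0 show ?case using assms by (simp add: cj_def minv_left)
next
  case (Suc n)
  have "mmul V (mmul (minv V) Z) = Z" for Z using assms by (simp add: mmul_assoc[symmetric] minv_right)
  thus ?case using Suc by (simp add: cj_def mmul_assoc)
qed

lemma cj_minv: assumes "mdet V = 1" shows "minv (cj V M) = cj V (minv M)"
  by (simp add: cj_def minv_mmul mmul_assoc)

lemma cj_mzpow: assumes "mdet V = 1" shows "mzpow (cj V M) k = cj V (mzpow M k)"
  using assms by (simp add: mzpow_def cj_mpow[OF assms] cj_minv[OF assms])

lemma cj_mneg: "cj V (mneg M) = mneg (cj V M)"
  by (simp add: cj_def mmul_mneg_left mmul_mneg_right)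

lemma cj_back: assumes "mdet V = 1" shows "cj V (mmul (mmul V N) (minv V)) = N"
proof -
  have "mmul (minv V) (mmul V Z) = Z" for Z using assms by (simp add: mmul_assoc[symmetric] minv_left)
  thus ?thesis using assms by (simp add: cj_def mmul_assoc minv_left)
qed

lemma stab_gen_conj: assumes sg: "stab_generator p x M" and GV: "V \<in> hecke_mats p"
  and y: "moeb (minv V) (Some x) = Some y"
  shows "stab_generator p y (cj V M)"
proof -
  have G: "M \<in> hecke_mats p" and f: "fx M x"
    and g: "\<And>N. N \<in> hecke_mats p \<Longrightarrow> fx N x \<Longrightarrow> \<exists>n::int. N = mzpow M n \<or> N = mneg (mzpow M n)"
    using sg unfolding stab_generator_def by auto
  have dV: "mdet V = 1" using hecke_det[OF GV] .
  have dM: "mdet M = 1" using hecke_det[OF G] .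
  have Vy: "moeb V (Some y) = Some x"
  proof -
    have "moeb (mmul V (minv V)) (Some x) = moeb V (moeb (minv V) (Some x))"
      by (rule moeb_mmul) (simp add: dV)
    thus ?thesis using y by (simp add: minv_right[OF dV] mid_def)
  qed
  have Gc: "cj V M \<in> hecke_mats p" unfolding cj_def by (intro hecke_mmul hecke_minv GV G)
  have fc: "fx (cj V M) y"
  proof -
    have "moeb (cj V M) (Some y) = moeb (mmul (minv V) M) (moeb V (Some y))"
      unfolding cj_def by (rule moeb_mmul) (simp add: dV)
    also have "\<dots> = moeb (minv V) (moeb M (Some x))" using Vy by (simp add: moeb_mmul dM)
    finally show ?thesis using f y by simp
  qed
  have "\<exists>n::int. N = mzpow (cj V M) n \<or> N = mneg (mzpow (cj V M) n)"
    if GN: "N \<in> hecke_mats p" and fN: "fx N y" for N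
  proof -
    define N' where "N' = mmul (mmul V N) (minv V)"
    have dN: "mdet N = 1" using hecke_det[OF GN] .
    have GN': "N' \<in> hecke_mats p" unfolding N'_def by (intro hecke_mmul hecke_minv GV GN)
    have fN': "fx N' x"
    proof -
      have "moeb N' (Some x) = moeb (mmul V N) (moeb (minv V) (Some x))"
        unfolding N'_def by (rule moeb_mmul) (simp add: dV)
      also have "\<dots> = moeb V (moeb N (Some y))" using y by (simp add: moeb_mmul dN)
      finally show ?thesis using fN Vy by simp
    qed
    obtain n where "N' = mzpow M n \<or> N' = mneg (mzpow M n)" using g[OF GN' fN'] by blast
    hence "cj V N' = cj V (mzpow M n) \<or> cj V N' = cj V (mneg (mzpow M n))" by auto
    hence "N = mzpow (cj V M) n \<or> N = mneg (mzpow (cj V M) n)"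
      unfolding N'_def cj_back[OF dV] cj_mzpow[OF dV] cj_mneg .
    thus ?thesis by blast
  qed
  thus ?thesis unfolding stab_generator_def using Gc fc by blast
qed

lemma ln_nu_mzpow: assumes "mdet M = 1" "fx M x"
  shows "ln \<bar>nu (mzpow M k) x\<bar> = real_of_int k * ln \<bar>nu M x\<bar>"
proof (cases "k \<ge> 0")
  case True
  have "nu (mzpow M k) x = (nu M x) ^ nat k" using mpow_fx[OF assms(2)] True by (simp add: mzpow_def)
  hence "ln \<bar>nu (mzpow M k) x\<bar> = real (nat k) * ln \<bar>nu M x\<bar>" by (simp add: power_abs ln_realpow)
  thus ?thesis using True by simp
next
  case False
  have fi: "fx (minv M) x" "nu (minv M) x = 1 / nu M x" using fx_minv[OF assms] by auto
  have "nu (mzpow M k) x = (1 / nu M x) ^ nat (-k)" using mpow_fx[OF fi(1)] fi(2) False by (simp add: mzpow_def)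
  hence "ln \<bar>nu (mzpow M k) x\<bar> = real (nat (-k)) * ln (inverse \<bar>nu M x\<bar>)"
    by (simp add: power_abs ln_realpow abs_divide inverse_eq_divide)
  thus ?thesis using False by (simp add: ln_inverse)
qed

definition HP :: "nat \<Rightarrow> real \<Rightarrow> bqf \<Rightarrow> bool" where
  "HP p \<alpha> Q \<longleftrightarrow> (\<exists>a b c d.
      stab_generator p \<alpha> (M2 a b c d) \<and> c \<noteq> 0 \<and> (a + d)^2 - 4 > 0 \<and>
      \<alpha> = (a - d + sqrt ((a + d)^2 - 4)) / (2 * c) \<and> Q = (c, d - a, - b))"

lemma hyp_bqf_HP: "hyp_bqf p \<alpha> = (THE Q. HP p \<alpha> Q)"
  unfolding hyp_bqf_def HP_def ..

lemma sq_gt4: "\<bar>t\<bar> > 2 \<Longrightarrow> (t::real)^2 - 4 > 0"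
proof -
  assume "\<bar>t\<bar> > 2"
  hence "2*2 < \<bar>t\<bar>*\<bar>t\<bar>" by (intro mult_strict_mono) auto
  thus ?thesis by (simp add: power2_eq_square abs_mult_self_eq)
qed

lemma HP_exists: assumes p: "p \<ge> 3" and h: "hyp_fixed_point p x" shows "\<exists>Q. HP p x Q"
proof -
  obtain M0 where G0: "M0 \<in> hecke_mats p" and hy: "hyperbolic M0" and f0: "fx M0 x"
    using h unfolding hyp_fixed_point_def by blast
  have d0: "mdet M0 = 1" using hecke_det[OF G0] .
  have "\<bar>nu M0 x + 1 / nu M0 x\<bar> > 2" using hy fx_trace[OF d0 f0] unfolding hyperbolic_def by simp
  hence n1: "\<bar>nu M0 x\<bar> \<noteq> 1" by (rule trace_abs_nu)
  have nz: "nu M0 x \<noteq> 0" using f0 by (cases M0) (auto simp: fix_iff simp del: moeb.simps)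
  obtain M1 where G1: "M1 \<in> hecke_mats p" and f1: "fx M1 x" and m1: "\<bar>nu M1 x\<bar> > 1"
  proof (cases "\<bar>nu M0 x\<bar> > 1")
    case True thus ?thesis using that G0 f0 by blast
  next
    case False
    hence lt: "\<bar>nu M0 x\<bar> < 1" using n1 by simp
    have fi: "fx (minv M0) x" "nu (minv M0) x = 1 / nu M0 x" using fx_minv[OF d0 f0] by auto
    have "\<bar>nu (minv M0) x\<bar> = 1 / \<bar>nu M0 x\<bar>" using fi(2) by (simp add: abs_divide)
    moreover have "1 / \<bar>nu M0 x\<bar> > 1" using lt nz by (simp add: less_divide_eq)
    ultimately show ?thesis using that hecke_minv[OF G0] fi(1) by simp
  qed
  interpret hctx p x M1 using p G1 f1 m1 by unfold_locales
  obtain M where sg: "stab_generator p x M" and mM: "\<bar>nu M x\<bar> > 1" using gen_exists by blast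
  have GM: "M \<in> hecke_mats p" and fM: "fx M x" using sg unfolding stab_generator_def by auto
  obtain a b c d where M: "M = M2 a b c d" by (cases M)
  have dM: "a*d - b*c = 1" using hecke_det[OF GM] M by simp
  have tr: "\<bar>a + d\<bar> > 2" using fx_trace[OF hecke_det[OF GM] fM] abs_nu_trace[OF mM] M by simp
  have c0: "c \<noteq> 0" using hyp_c_ne0[of a b c d p] GM M p tr by simp
  have D: "(a + d)^2 - 4 > 0" using sq_gt4[OF tr] .
  have fe: "a*x + b = x*(c*x+d)" using fM M fix_iff by simp
  hence qe: "c*x*x + (d - a)*x + (-b) = 0" by (simp add: algebra_simps)
  have disc: "(d - a)^2 - 4*c*(-b) = (a + d)^2 - 4" using dM by (simp add: power2_eq_square algebra_simps)
  have "x = (-(d - a) + sqrt ((d - a)^2 - 4*c*(-b))) / (2*c) \<or> x = (-(d - a) - sqrt ((d - a)^2 - 4*c*(-b))) / (2*c)"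
    using quad_roots[OF c0 qe] disc D by simp
  hence "x = (a - d + sqrt ((a + d)^2 - 4)) / (2*c) \<or> x = (a - d - sqrt ((a + d)^2 - 4)) / (2*c)"
    unfolding disc by simp
  thus ?thesis
  proof
    assume "x = (a - d + sqrt ((a + d)^2 - 4)) / (2*c)"
    thus ?thesis unfolding HP_def using sg M c0 D by blast
  next
    assume xe: "x = (a - d - sqrt ((a + d)^2 - 4)) / (2*c)"
    have sg': "stab_generator p x (M2 d (-b) (-c) a)" using stab_gen_minv[OF sg] M by simp
    have xe2: "x = (d - a + sqrt ((d + a)^2 - 4)) / (2 * (-c))" using xe c0 by (simp add: field_simps add.commute)
    have D2: "(d + a)^2 - 4 > 0" using D by (simp add: add.commute)
    have "HP p x (-c, a - d, - (-b))" unfolding HP_def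
      by (rule exI[where x=d], rule exI[where x="-b"], rule exI[where x="-c"], rule exI[where x=a])
        (use sg' c0 xe2 D2 in auto)
    thus ?thesis by blast
  qed
qed

lemma HP_unique: assumes p: "p \<ge> 3" and H1: "HP p x Q1" and H2: "HP p x Q2" shows "Q1 = Q2"
proof -
  obtain a b c d where sg1: "stab_generator p x (M2 a b c d)" and c0: "c \<noteq> 0"
    and D: "(a + d)^2 - 4 > 0" and x1: "x = (a - d + sqrt ((a + d)^2 - 4)) / (2 * c)"
    and Q1: "Q1 = (c, d - a, - b)" using H1 unfolding HP_def by blast
  obtain a' b' c' d' where sg2: "stab_generator p x (M2 a' b' c' d')" and c0': "c' \<noteq> 0"
    and D': "(a' + d')^2 - 4 > 0" and x2: "x = (a' - d' + sqrt ((a' + d')^2 - 4)) / (2 * c')"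
    and Q2: "Q2 = (c', d' - a', - b')" using H2 unfolding HP_def by blast
  define Ma where "Ma = M2 a b c d"
  define Mb where "Mb = M2 a' b' c' d'"
  have Ga: "Ma \<in> hecke_mats p" and fa: "fx Ma x"
    and ga: "\<And>N. N \<in> hecke_mats p \<Longrightarrow> fx N x \<Longrightarrow> \<exists>n::int. N = mzpow Ma n \<or> N = mneg (mzpow Ma n)"
    using sg1 unfolding stab_generator_def Ma_def by auto
  have Gb: "Mb \<in> hecke_mats p" and fb: "fx Mb x"
    and gb: "\<And>N. N \<in> hecke_mats p \<Longrightarrow> fx N x \<Longrightarrow> \<exists>n::int. N = mzpow Mb n \<or> N = mneg (mzpow Mb n)"
    using sg2 unfolding stab_generator_def Mb_def by auto
  have da: "mdet Ma = 1" using hecke_det[OF Ga] .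
  have db: "mdet Mb = 1" using hecke_det[OF Gb] .
  obtain n where n: "Mb = mzpow Ma n \<or> Mb = mneg (mzpow Ma n)" using ga[OF Gb fb] by blast
  obtain k where k: "Ma = mzpow Mb k \<or> Ma = mneg (mzpow Mb k)" using gb[OF Ga fa] by blast
  have absneg: "\<bar>nu (mneg Z) x\<bar> = \<bar>nu Z x\<bar>" for Z by (cases Z) (simp add: abs_minus_commute add.commute)
  have Lb: "ln \<bar>nu Mb x\<bar> = real_of_int n * ln \<bar>nu Ma x\<bar>"
    using n ln_nu_mzpow[OF da fa, of n] absneg by auto
  have La: "ln \<bar>nu Ma x\<bar> = real_of_int k * ln \<bar>nu Mb x\<bar>"
    using k ln_nu_mzpow[OF db fb, of k] absneg by auto
  have nz: "nu Ma x \<noteq> 0" using fa unfolding Ma_def by (auto simp: fix_iff simp del: moeb.simps)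
  have n1: "\<bar>nu Ma x\<bar> \<noteq> 1"
  proof
    assume a1: "\<bar>nu Ma x\<bar> = 1"
    have "mtrace Ma = nu Ma x + 1 / nu Ma x" using fx_trace[OF da fa] .
    moreover have "nu Ma x = 1 \<or> nu Ma x = -1" using a1 by auto
    ultimately have "a + d = 2 \<or> a + d = -2" unfolding Ma_def by auto
    hence "(a + d)^2 = 4" by auto
    thus False using D by simp
  qed
  have L0: "ln \<bar>nu Ma x\<bar> \<noteq> 0" using n1 nz by simp
  have "ln \<bar>nu Ma x\<bar> = real_of_int (k * n) * ln \<bar>nu Ma x\<bar>" using La Lb by simp
  hence "real_of_int (k * n) = 1" using L0 by simp
  hence "k * n = 1" by linarith
  hence nn: "n = 1 \<or> n = -1" by (auto simp: zmult_eq_1_iff)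
  have z1: "mzpow Ma 1 = Ma" by (simp add: mzpow_def)
  have zm1: "mzpow Ma (-1) = minv Ma" by (simp add: mzpow_def)
  define S where "S = sqrt ((a + d)^2 - 4)"
  have Sp: "S > 0" using D unfolding S_def by simp
  have x1': "x = (a - d + S) / (2*c)" using x1 unfolding S_def .
  consider "Mb = Ma" | "Mb = mneg Ma" | "Mb = minv Ma" | "Mb = mneg (minv Ma)"
    using n nn z1 zm1 by auto
  thus ?thesis
  proof cases
    case 1 thus ?thesis using Q1 Q2 unfolding Ma_def Mb_def by simp
  next
    case 2
    hence e: "a' = -a" "b' = -b" "c' = -c" "d' = -d" unfolding Ma_def Mb_def by auto
    have "(a' + d')^2 = (a + d)^2" using e by (simp add: power2_eq_square algebra_simps)
    hence "x = (-a + d + S) / (2 * (-c))" using x2 e unfolding S_def by simp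
    hence "x = (a - d - S) / (2*c)" using c0 by (simp add: field_simps)
    hence "S = 0" using x1' c0 by (simp add: field_simps)
    thus ?thesis using Sp by simp
  next
    case 3
    hence e: "a' = d" "b' = -b" "c' = -c" "d' = a" unfolding Ma_def Mb_def by auto
    have "(a' + d')^2 = (a + d)^2" using e by (simp add: power2_eq_square algebra_simps)
    hence "x = (d - a + S) / (2 * (-c))" using x2 e unfolding S_def by simp
    hence "x = (a - d - S) / (2*c)" using c0 by (simp add: field_simps)
    hence "S = 0" using x1' c0 by (simp add: field_simps)
    thus ?thesis using Sp by simp
  next
    case 4
    hence e: "a' = -d" "b' = b" "c' = c" "d' = -a" unfolding Ma_def Mb_def by auto
    thus ?thesis using Q1 Q2 by simp
  qed
qed

lemma hyp_bqf_eq: assumes "p \<ge> 3" "HP p x Q" shows "hyp_bqf p x = Q"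
  unfolding hyp_bqf_HP using assms HP_unique by (intro the_equality) auto

lemma HP_witness: assumes "HP p x Q"
  obtains a b c d where "stab_generator p x (M2 a b c d)" "c \<noteq> 0" "(a + d)^2 - 4 > 0"
    "x = (a - d + sqrt ((a + d)^2 - 4)) / (2 * c)" "Q = (c, d - a, - b)"
  using assms unfolding HP_def by blast

theorem lemma3p2:
  fixes p :: nat and \<alpha> \<beta> :: real and V :: mat2
  assumes "p \<ge> 3"
    and "hyp_fixed_point p \<alpha>" and "hyp_fixed_point p \<beta>"
    and "V \<in> hecke_mats p"
  shows "hyp_bqf p \<beta> = bqf_comp (hyp_bqf p \<alpha>) V \<longleftrightarrow>
         Some \<beta> = moeb (minv V) (Some \<alpha>)"
proof -
  note p = assms(1)
  obtain Qa where Ha: "HP p \<alpha> Qa" using HP_exists[OF p assms(2)] by blast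
  have hA: "hyp_bqf p \<alpha> = Qa" using hyp_bqf_eq[OF p Ha] .
  obtain a b c d where sga: "stab_generator p \<alpha> (M2 a b c d)" and c0: "c \<noteq> 0"
    and Da: "(a + d)^2 - 4 > 0" and xa: "\<alpha> = (a - d + sqrt ((a + d)^2 - 4)) / (2 * c)"
    and Qa: "Qa = (c, d - a, - b)" using HP_witness[OF Ha] by blast
  obtain Qb where Hb: "HP p \<beta> Qb" using HP_exists[OF p assms(3)] by blast
  have hB: "hyp_bqf p \<beta> = Qb" using hyp_bqf_eq[OF p Hb] .
  obtain a2 b2 c2 d2 where sgb: "stab_generator p \<beta> (M2 a2 b2 c2 d2)" and c20: "c2 \<noteq> 0"
    and Db: "(a2 + d2)^2 - 4 > 0" and xb: "\<beta> = (a2 - d2 + sqrt ((a2 + d2)^2 - 4)) / (2 * c2)"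
    and Qb: "Qb = (c2, d2 - a2, - b2)" using HP_witness[OF Hb] by blast
  have Gma: "M2 a b c d \<in> hecke_mats p" using sga unfolding stab_generator_def by blast
  have Gmb: "M2 a2 b2 c2 d2 \<in> hecke_mats p" using sgb unfolding stab_generator_def by blast
  have dma: "mdet (M2 a b c d) = 1" using hecke_det[OF Gma] .
  have dmb: "mdet (M2 a2 b2 c2 d2) = 1" using hecke_det[OF Gmb] .
  obtain v1 v2 v3 v4 where V: "V = M2 v1 v2 v3 v4" by (cases V)
  have dV: "mdet V = 1" using hecke_det[OF assms(4)] .
  hence dV': "v1*v4 - v2*v3 = 1" using V by simp
  have qa: "qroot Qa = \<alpha>" using qroot_qf[OF dma] xa Qa by simp
  have qb: "qroot Qb = \<beta>" using qroot_qf[OF dmb] xb Qb by simp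
  have qa': "qroot (c, d - a, - b) = \<alpha>" using qa Qa by simp
  have discA: "(d - a)^2 - 4*c*(-b) > 0"
  proof -
    have "(d - a)^2 - 4*c*(-b) = (a + d)^2 - 4" using dma by (simp add: power2_eq_square algebra_simps)
    thus ?thesis using Da by simp
  qed
  have mV: "moeb (minv V) (Some \<alpha>) = (if v1 - v3*\<alpha> = 0 then None else Some ((v4*\<alpha> - v2) / (v1 - v3*\<alpha>)))"
    unfolding V by (simp add: algebra_simps)
  obtain A' B' C' where Q': "bqf_comp Qa V = (A', B', C')" by (cases "bqf_comp Qa V") auto
  show ?thesis
  proof
    assume "hyp_bqf p \<beta> = bqf_comp (hyp_bqf p \<alpha>) V"
    hence eq: "Qb = bqf_comp Qa V" using hA hB by simp
    hence "A' = c2" using Q' Qb by simp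
    hence A'0: "A' \<noteq> 0" using c20 by simp
    have rc: "v1 - v3 * qroot (c, d - a, - b) \<noteq> 0"
      "qroot (A', B', C') = (v4 * qroot (c, d - a, - b) - v2) / (v1 - v3 * qroot (c, d - a, - b))"
      using root_comp[OF c0 discA dV'] Q' A'0 unfolding Qa V by auto
    have "\<beta> = qroot (A', B', C')" using qb unfolding eq Q' by simp
    hence "\<beta> = (v4 * \<alpha> - v2) / (v1 - v3 * \<alpha>)" using rc(2) unfolding qa' by simp
    moreover have "v1 - v3*\<alpha> \<noteq> 0" using rc(1) unfolding qa' .
    ultimately show "Some \<beta> = moeb (minv V) (Some \<alpha>)" using mV by simp
  next
    assume y: "Some \<beta> = moeb (minv V) (Some \<alpha>)"
    define M' where "M' = cj V (M2 a b c d)"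
    obtain a' b' c' d' where M': "M' = M2 a' b' c' d'" by (cases M')
    have sg': "stab_generator p \<beta> (M2 a' b' c' d')"
      using stab_gen_conj[OF sga assms(4) y[symmetric]] M' M'_def by simp
    have GM': "M2 a' b' c' d' \<in> hecke_mats p" using sg' unfolding stab_generator_def by blast
    have dM': "mdet (M2 a' b' c' d') = 1" using hecke_det[OF GM'] .
    have tr: "a' + d' = a + d" using trace_conj[OF dV, of "M2 a b c d"] M' M'_def unfolding cj_def by simp
    have Dp: "(a' + d')^2 - 4 > 0" using Da tr by simp
    have "\<bar>a' + d'\<bar> > 2"
    proof (rule ccontr)
      assume "\<not> \<bar>a' + d'\<bar> > 2"
      hence "\<bar>a' + d'\<bar> * \<bar>a' + d'\<bar> \<le> 2 * 2" by (intro mult_mono) auto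
      hence "(a' + d')^2 \<le> 4" by (simp add: power2_eq_square abs_mult_self_eq)
      thus False using Dp by simp
    qed
    hence c'0: "c' \<noteq> 0" using hyp_c_ne0[OF GM' p] by simp
    have qf': "qf (M2 a' b' c' d') = bqf_comp Qa V"
      using qf_conj[of V "M2 a b c d"] M' M'_def Qa unfolding cj_def by simp
    hence "A' = c'" using Q' by simp
    hence A'0: "A' \<noteq> 0" using c'0 by simp
    have rc: "v1 - v3 * qroot (c, d - a, - b) \<noteq> 0"
      "qroot (A', B', C') = (v4 * qroot (c, d - a, - b) - v2) / (v1 - v3 * qroot (c, d - a, - b))"
      using root_comp[OF c0 discA dV'] Q' A'0 unfolding Qa V by auto
    have "v1 - v3*\<alpha> \<noteq> 0" using rc(1) unfolding qa' .
    hence "\<beta> = (v4 * \<alpha> - v2) / (v1 - v3 * \<alpha>)" using y mV by simp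
    also have "\<dots> = qroot (A', B', C')" using rc(2) unfolding qa' by simp
    finally have "\<beta> = qroot (qf (M2 a' b' c' d'))" unfolding qf' Q' .
    hence xb': "\<beta> = (a' - d' + sqrt ((a' + d')^2 - 4)) / (2 * c')" using qroot_qf[OF dM'] by simp
    have "HP p \<beta> (c', d' - a', - b')" unfolding HP_def using sg' c'0 Dp xb' by blast
    hence "hyp_bqf p \<beta> = (c', d' - a', - b')" using hyp_bqf_eq[OF p] by blast
    thus "hyp_bqf p \<beta> = bqf_comp (hyp_bqf p \<alpha>) V" using qf' hA by simp
  qed
qed

end
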